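(* A binary relation $\succsim$ on $l_\infty$ satisfies Weak order, Monotonicity, Continuity, ICRP, Convexity, IDIS and Time invariance if and only if there exists a unique grounded, weak$^\star$-lower semicontinuous and convex function $c:\mathcal B\to[0,\infty]$ such that $$I(x)=\min_{p\in\mathcal B}\{\langle x,p\rangle+c(p)\}$$ is a constant equivalent representing $\succsim$.
   Context: $l_\infty$: real bounded sequences $x=(x_0,x_1,\dots)$; $\theta\in\mathbb R$ also a constant sequence; $x\ge y$ coordinatewise. $ba(\mathbb N)$: norm dual of $l_\infty$, pairing $\langle x,\mu\rangle$, weak$^\star$ topology. $\Delta$: finitely additive probability measures on $2^{\mathbb N}$. $\mathcal B$: Banach–Mazur limits, $\mu\in\Delta$ with $\langle x,\mu\rangle=\langle(x_1,x_2,\dots),\mu\rangle$ for all $x$. Grounded: infimum $0$. Constant equivalent: $I$ with $x\sim I(x)$, $x\succsim y\iff I(x)\ge I(y)$. Weak order: complete, transitive. Monotonicity: $x\ge y\Rightarrow x\succsim y$, $1\succ0$. Continuity: for $x\succsim y\succsim z$ the sets $\{\alpha\in[0,1]:\alpha x+(1-\alpha)z\succsim y\}$, $\{\alpha:y\succsim\alpha x+(1-\alpha)z\}$ are closed. ICRP: $x\succsim y\Rightarrow x+\theta\succsim y+\theta$. Convexity: $x\succsim\theta,y\succsim\theta\Rightarrow\lambda x+(1-\lambda)y\succsim\theta$. IDIS: $x+d\succsim x\Rightarrow x+(0,d)\succsim x$, with $(0,d)=(0,d_0,d_1,\dots)$. Time invariance: $x\sim(x_1,x_2,x_3,\dots)$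 for all $x\in l_\infty$. *)

theory Defs
  imports "HOL-Analysis.Analysis" "HOL-Library.Disjoint_Sets"
begin

type_synonym seq = "nat \<Rightarrow> real"
type_synonym setfun = "nat set \<Rightarrow> real"

definition linf :: "seq set" where
  "linf = {x. bounded (range x)}"

definition cst :: "real \<Rightarrow> seq" where
  "cst \<theta> = (\<lambda>_. \<theta>)"

definition fa_prob :: "setfun set" where
  "fa_prob = {\<mu>. (\<forall>A. \<mu> A \<ge> 0) \<and> \<mu> UNIV = 1 \<and>
                 (\<forall>A B. A \<inter> B = {} \<longrightarrow> \<mu> (A \<union> B) = \<mu> A + \<mu> B)}"

text \<open>The pairing (integral of a bounded sequence against a finitely additive
  probability measure), defined as the supremum of lower sums over finite partitions.\<close>
definition pairing :: "seq \<Rightarrow> setfun \<Rightarrow> real" where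
  "pairing x \<mu> = (SUP P \<in> {P. finite P \<and> partition_on UNIV P}.
                    (\<Sum>A\<in>P. Inf (x ` A) * \<mu> A))"

definition BML :: "setfun set" where
  "BML = {\<mu> \<in> fa_prob. \<forall>x \<in> linf. pairing x \<mu> = pairing (\<lambda>n. x (Suc n)) \<mu>}"

definition weak_star :: "setfun topology" where
  "weak_star = topology_generated_by
      {{\<mu>. pairing x \<mu> \<in> U} | x U. x \<in> linf \<and> open U}"

text \<open>Axioms on a binary relation R on l_infinity (R x y means x is weakly preferred to y).\<close>
definition weak_order :: "(seq \<Rightarrow> seq \<Rightarrow> bool) \<Rightarrow> bool" where
  "weak_order R \<longleftrightarrow> (\<forall>x\<in>linf. \<forall>y\<in>linf. R x y \<or> R y x) \<and>
     (\<forall>x\<in>linf. \<forall>y\<in>linf. \<forall>z\<in>linf. R x y \<and> R y z \<longrightarrow> R x z)"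

definition monotonicity :: "(seq \<Rightarrow> seq \<Rightarrow> bool) \<Rightarrow> bool" where
  "monotonicity R \<longleftrightarrow> (\<forall>x\<in>linf. \<forall>y\<in>linf. (\<forall>n. x n \<ge> y n) \<longrightarrow> R x y) \<and>
     R (cst 1) (cst 0) \<and> \<not> R (cst 0) (cst 1)"

definition continuity :: "(seq \<Rightarrow> seq \<Rightarrow> bool) \<Rightarrow> bool" where
  "continuity R \<longleftrightarrow> (\<forall>x\<in>linf. \<forall>y\<in>linf. \<forall>z\<in>linf. R x y \<and> R y z \<longrightarrow>
      closed {\<alpha> \<in> {0..1}. R (\<lambda>n. \<alpha> * x n + (1 - \<alpha>) * z n) y} \<and>
      closed {\<alpha> \<in> {0..1}. R y (\<lambda>n. \<alpha> * x n + (1 - \<alpha>) * z n)})"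

definition ICRP :: "(seq \<Rightarrow> seq \<Rightarrow> bool) \<Rightarrow> bool" where
  "ICRP R \<longleftrightarrow> (\<forall>x\<in>linf. \<forall>y\<in>linf. \<forall>\<theta>::real.
      R x y \<longrightarrow> R (\<lambda>n. x n + \<theta>) (\<lambda>n. y n + \<theta>))"

definition convexity :: "(seq \<Rightarrow> seq \<Rightarrow> bool) \<Rightarrow> bool" where
  "convexity R \<longleftrightarrow> (\<forall>x\<in>linf. \<forall>y\<in>linf. \<forall>\<theta>::real. \<forall>t\<in>{0..1::real}.
      R x (cst \<theta>) \<and> R y (cst \<theta>) \<longrightarrow> R (\<lambda>n. t * x n + (1 - t) * y n) (cst \<theta>))"

definition delay :: "seq \<Rightarrow> seq" where
  "delay d = (\<lambda>n. if n = 0 then 0 else d (n - 1))"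

definition IDIS :: "(seq \<Rightarrow> seq \<Rightarrow> bool) \<Rightarrow> bool" where
  "IDIS R \<longleftrightarrow> (\<forall>x\<in>linf. \<forall>d\<in>linf.
      R (\<lambda>n. x n + d n) x \<longrightarrow> R (\<lambda>n. x n + delay d n) x)"

definition time_invariance :: "(seq \<Rightarrow> seq \<Rightarrow> bool) \<Rightarrow> bool" where
  "time_invariance R \<longleftrightarrow> (\<forall>x\<in>linf. R x (\<lambda>n. x (Suc n)) \<and> R (\<lambda>n. x (Suc n)) x)"

definition grounded :: "(setfun \<Rightarrow> ereal) \<Rightarrow> bool" where
  "grounded c \<longleftrightarrow> (INF p\<in>BML. c p) = 0"

definition weak_star_lsc :: "(setfun \<Rightarrow> ereal) \<Rightarrow> bool" where
  "weak_star_lsc c \<longleftrightarrow>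
     (\<forall>t. closedin (subtopology weak_star BML) {p \<in> BML. c p \<le> t})"

definition convex_cost :: "(setfun \<Rightarrow> ereal) \<Rightarrow> bool" where
  "convex_cost c \<longleftrightarrow> (\<forall>p\<in>BML. \<forall>q\<in>BML. \<forall>t\<in>{0<..<1::real}.
      c (\<lambda>A. t * p A + (1 - t) * q A) \<le> ereal t * c p + ereal (1 - t) * c q)"

definition admissible_cost :: "(setfun \<Rightarrow> ereal) \<Rightarrow> bool" where
  "admissible_cost c \<longleftrightarrow> (\<forall>p\<in>BML. c p \<ge> 0) \<and> grounded c \<and> weak_star_lsc c \<and> convex_cost c"

definition var_I :: "(setfun \<Rightarrow> ereal) \<Rightarrow> seq \<Rightarrow> ereal" where
  "var_I c x = (INF p\<in>BML. ereal (pairing x p) + c p)"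

definition min_represents :: "(setfun \<Rightarrow> ereal) \<Rightarrow> (seq \<Rightarrow> seq \<Rightarrow> bool) \<Rightarrow> bool" where
  "min_represents c R \<longleftrightarrow>
     (\<forall>x\<in>linf. \<exists>p\<in>BML. ereal (pairing x p) + c p = var_I c x) \<and>
     (\<forall>x\<in>linf. \<exists>r::real. var_I c x = ereal r \<and> R x (cst r) \<and> R (cst r) x) \<and>
     (\<forall>x\<in>linf. \<forall>y\<in>linf. R x y \<longleftrightarrow> var_I c x \<ge> var_I c y)"

end

theory Submission
  imports Defs
begin


abbreviation lc :: "real \<Rightarrow> ('i \<Rightarrow> real) \<Rightarrow> real \<Rightarrow> ('i \<Rightarrow> real) \<Rightarrow> ('i \<Rightarrow> real)" where
  "lc a u b v \<equiv> (\<lambda>j. a * u j + b * v j)"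

definition linon :: "('i \<Rightarrow> real) set \<Rightarrow> (('i \<Rightarrow> real) \<Rightarrow> real) \<Rightarrow> bool" where
  "linon W F \<longleftrightarrow> (\<forall>u\<in>W. \<forall>v\<in>W. \<forall>a b. F (\<lambda>j. a * u j + b * v j) = a * F u + b * F v)"

definition subsp :: "('i \<Rightarrow> real) set \<Rightarrow> bool" where
  "subsp W \<longleftrightarrow> W \<noteq> {} \<and> (\<forall>u\<in>W. \<forall>v\<in>W. \<forall>a b. (\<lambda>j. a * u j + b * v j) \<in> W)"

definition cvxon :: "('i \<Rightarrow> real) set \<Rightarrow> (('i \<Rightarrow> real) \<Rightarrow> real) \<Rightarrow> bool" where
  "cvxon W p \<longleftrightarrow> (\<forall>u\<in>W. \<forall>v\<in>W. \<forall>t. 0 \<le> t \<and> t \<le> 1 \<longrightarrow>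
      p (\<lambda>j. t * u j + (1 - t) * v j) \<le> t * p u + (1 - t) * p v)"

lemma subspD: "subsp W \<Longrightarrow> u \<in> W \<Longrightarrow> v \<in> W \<Longrightarrow> (\<lambda>j. a * u j + b * v j) \<in> W"
  by (simp add: subsp_def)

lemma subsp_zero: "subsp W \<Longrightarrow> (\<lambda>j. 0) \<in> W"
proof -
  assume W: "subsp W"
  then obtain u where "u \<in> W" by (auto simp: subsp_def)
  then have "lc 0 u 0 u \<in> W" using W by (simp only: subspD)
  then show ?thesis by simp
qed

context
  fixes W S :: "('i \<Rightarrow> real) set" and f p :: "('i \<Rightarrow> real) \<Rightarrow> real"
  assumes W: "subsp W" and S: "subsp S" and SW: "S \<subseteq> W" and f: "linon S f"
    and p: "cvxon W p" and fp: "\<And>u. u \<in> S \<Longrightarrow> f u \<le> p u"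
begin

definition good :: "(('i \<Rightarrow> real) \<times> real) set \<Rightarrow> bool" where
  "good G \<longleftrightarrow> G \<subseteq> W \<times> UNIV \<and>
     (\<forall>u a v b \<alpha> \<beta>. (u, a) \<in> G \<longrightarrow> (v, b) \<in> G \<longrightarrow> (lc \<alpha> u \<beta> v, \<alpha> * a + \<beta> * b) \<in> G) \<and>
     (\<forall>u a b. (u, a) \<in> G \<longrightarrow> (u, b) \<in> G \<longrightarrow> a = b) \<and>
     (\<forall>u\<in>S. (u, f u) \<in> G) \<and>
     (\<forall>u a. (u, a) \<in> G \<longrightarrow> a \<le> p u)"

lemma goodD:
  assumes "good G"
  shows "\<And>u a. (u, a) \<in> G \<Longrightarrow> u \<in> W"
    and "\<And>u a v b \<alpha> \<beta>. (u, a) \<in> G \<Longrightarrow> (v, b) \<in> G \<Longrightarrow> (lc \<alpha> u \<beta> v, \<alpha> * a + \<beta> * b) \<in> G"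
    and "\<And>u a b. (u, a) \<in> G \<Longrightarrow> (u, b) \<in> G \<Longrightarrow> a = b"
    and "\<And>u. u \<in> S \<Longrightarrow> (u, f u) \<in> G"
    and "\<And>u a. (u, a) \<in> G \<Longrightarrow> a \<le> p u"
  using assms unfolding good_def by blast+

lemma goodI:
  assumes "\<And>u a. (u, a) \<in> G \<Longrightarrow> u \<in> W"
    and "\<And>u a v b \<alpha> \<beta>. (u, a) \<in> G \<Longrightarrow> (v, b) \<in> G \<Longrightarrow> (lc \<alpha> u \<beta> v, \<alpha> * a + \<beta> * b) \<in> G"
    and "\<And>u a b. (u, a) \<in> G \<Longrightarrow> (u, b) \<in> G \<Longrightarrow> a = b"
    and "\<And>u. u \<in> S \<Longrightarrow> (u, f u) \<in> G"
    and "\<And>u a. (u, a) \<in> G \<Longrightarrow> a \<le> p u"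
  shows "good G"
  unfolding good_def using assms by fast

lemma good_G0: "good {(u, f u) | u. u \<in> S}"
proof (rule goodI)
  fix u a v b \<alpha> \<beta> assume "(u, a) \<in> {(u, f u) | u. u \<in> S}" "(v, b) \<in> {(u, f u) | u. u \<in> S}"
  then have uv: "u \<in> S" "v \<in> S" "a = f u" "b = f v" by auto
  have "lc \<alpha> u \<beta> v \<in> S" using S uv unfolding subsp_def by blast
  moreover have "f (lc \<alpha> u \<beta> v) = \<alpha> * a + \<beta> * b" using f uv unfolding linon_def by blast
  ultimately show "(lc \<alpha> u \<beta> v, \<alpha> * a + \<beta> * b) \<in> {(u, f u) | u. u \<in> S}" by force
qed (use SW fp in auto)

lemma good_Union: assumes C: "C \<in> chains {G. good G}" and ne: "C \<noteq> {}"
  shows "good (\<Union>C)"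
proof -
  have Cg: "\<And>X. X \<in> C \<Longrightarrow> good X" and ch: "\<And>X Y. X \<in> C \<Longrightarrow> Y \<in> C \<Longrightarrow> X \<subseteq> Y \<or> Y \<subseteq> X"
    using C by (auto simp: chains_def chain_subset_def)
  have two: "\<exists>Z\<in>C. x \<in> Z \<and> y \<in> Z" if xy: "x \<in> \<Union>C" "y \<in> \<Union>C" for x y
  proof -
    obtain X Y where "X \<in> C" "Y \<in> C" "x \<in> X" "y \<in> Y" using xy by blast
    then show ?thesis using ch[of X Y] by auto
  qed
  show ?thesis
  proof (rule goodI)
    fix u a assume "(u, a) \<in> \<Union>C"
    then obtain Z where "Z \<in> C" "(u, a) \<in> Z" by blast
    then show "u \<in> W" using goodD(1)[OF Cg] by blast
  next
    fix u a v b \<alpha> \<beta> assume "(u, a) \<in> \<Union>C" "(v, b) \<in> \<Union>C"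
    then obtain Z where Z: "Z \<in> C" "(u, a) \<in> Z" "(v, b) \<in> Z" using two by blast
    then have "(lc \<alpha> u \<beta> v, \<alpha> * a + \<beta> * b) \<in> Z" using goodD(2)[OF Cg[OF Z(1)]] by blast
    then show "(lc \<alpha> u \<beta> v, \<alpha> * a + \<beta> * b) \<in> \<Union>C" using Z(1) by blast
  next
    fix u a b assume "(u, a) \<in> \<Union>C" "(u, b) \<in> \<Union>C"
    then obtain Z where Z: "Z \<in> C" "(u, a) \<in> Z" "(u, b) \<in> Z" using two by blast
    then show "a = b" using goodD(3)[OF Cg[OF Z(1)]] by blast
  next
    fix u assume "u \<in> S"
    obtain X where "X \<in> C" using ne by blast
    then show "(u, f u) \<in> \<Union>C" using goodD(4)[OF Cg[of X]] \<open>u \<in> S\<close> by blast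
  next
    fix u a assume "(u, a) \<in> \<Union>C"
    then obtain Z where "Z \<in> C" "(u, a) \<in> Z" by blast
    then show "a \<le> p u" using goodD(5)[OF Cg] by blast
  qed
qed

lemma good_zero: assumes "good M" shows "((\<lambda>j. 0), 0) \<in> M"
proof -
  obtain u where "u \<in> S" using S by (auto simp: subsp_def)
  then have "(u, f u) \<in> M" using goodD(4)[OF assms] by blast
  then have "(lc 0 u 0 u, 0 * f u + 0 * f u) \<in> M" using goodD(2)[OF assms] by blast
  then show ?thesis by simp
qed

lemma good_extend:
  assumes M: "good M" and v: "v \<in> W" and nv: "\<And>a. (v, a) \<notin> M"
  shows "\<exists>G. good G \<and> M \<subseteq> G \<and> G \<noteq> M"
proof -
  note MW = goodD(1)[OF M] and Mlin = goodD(2)[OF M] and Mfun = goodD(3)[OF M] and Mdom = goodD(5)[OF M]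
  have pc: "\<And>u w t. u \<in> W \<Longrightarrow> w \<in> W \<Longrightarrow> 0 \<le> t \<Longrightarrow> t \<le> 1 \<Longrightarrow> p (lc t u (1 - t) w) \<le> t * p u + (1 - t) * p w"
    using p unfolding cvxon_def by blast
  define L where "L = {(a - p (lc 1 u (-s) v)) / s | u a s. (u, a) \<in> M \<and> s > 0}"
  have K: "(a2 - p (lc 1 u2 (-s2) v)) / s2 \<le> (p (lc 1 u1 s1 v) - a1) / s1"
    if m1: "(u1, a1) \<in> M" and m2: "(u2, a2) \<in> M" and s1: "s1 > 0" and s2: "s2 > 0" for u1 a1 u2 a2 s1 s2
  proof -
    define l where "l = s1 / (s1 + s2)"
    have l: "0 \<le> l" "l \<le> 1" using s1 s2 by (auto simp: l_def)
    have "(lc l u2 (1 - l) u1, l * a2 + (1 - l) * a1) \<in> M" using Mlin[OF m2 m1] .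
    then have 1: "l * a2 + (1 - l) * a1 \<le> p (lc l u2 (1 - l) u1)" by (rule Mdom)
    have z0: "l * (-s2) + (1 - l) * s1 = 0" using s1 s2 unfolding l_def by (simp add: field_simps)
    have eqf: "lc l u2 (1 - l) u1 = lc l (lc 1 u2 (-s2) v) (1 - l) (lc 1 u1 s1 v)"
    proof (rule ext)
      fix j
      have "l * (1 * u2 j + (-s2) * v j) + (1 - l) * (1 * u1 j + s1 * v j)
          = (l * u2 j + (1 - l) * u1 j) + (l * (-s2) + (1 - l) * s1) * v j"
        by (simp add: algebra_simps)
      then show "l * u2 j + (1 - l) * u1 j = l * (1 * u2 j + (-s2) * v j) + (1 - l) * (1 * u1 j + s1 * v j)"
        unfolding z0 by simp
    qed
    have w1: "lc 1 u2 (-s2) v \<in> W" by (rule subspD[OF W MW[OF m2] v])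
    have w2: "lc 1 u1 s1 v \<in> W" by (rule subspD[OF W MW[OF m1] v])
    have 2: "p (lc l (lc 1 u2 (-s2) v) (1 - l) (lc 1 u1 s1 v)) \<le> l * p (lc 1 u2 (-s2) v) + (1 - l) * p (lc 1 u1 s1 v)"
      by (rule pc[OF w1 w2 l])
    have 2: "l * a2 + (1 - l) * a1 \<le> l * p (lc 1 u2 (-s2) v) + (1 - l) * p (lc 1 u1 s1 v)"
      using 1 2 unfolding eqf by linarith
    define P2 where "P2 = p (lc 1 u2 (-s2) v)"
    define P1 where "P1 = p (lc 1 u1 s1 v)"
    have 3: "l * a2 + (1 - l) * a1 \<le> l * P2 + (1 - l) * P1" using 2 unfolding P1_def P2_def .
    have "(s1 + s2) * (l * a2 + (1 - l) * a1) \<le> (s1 + s2) * (l * P2 + (1 - l) * P1)"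
      using 3 s1 s2 by (intro mult_left_mono) auto
    moreover have "(s1 + s2) * l = s1" "(s1 + s2) * (1 - l) = s2" using s1 s2 by (auto simp: l_def field_simps)
    ultimately have "s1 * a2 + s2 * a1 \<le> s1 * P2 + s2 * P1"
      by (simp only: distrib_left mult.assoc[symmetric])
    then have 4: "s1 * (a2 - P2) \<le> s2 * (P1 - a1)" by (simp add: algebra_simps)
    have "(a2 - P2) / s2 = (s1 * (a2 - P2)) / (s1 * s2)" using s1 by simp
    also have "\<dots> \<le> (s2 * (P1 - a1)) / (s1 * s2)" using 4 s1 s2 by (intro divide_right_mono) auto
    also have "\<dots> = (P1 - a1) / s1" using s2 by simp
    finally show ?thesis unfolding P1_def P2_def .
  qed
  have z: "((\<lambda>j. 0), 0) \<in> M" by (rule good_zero[OF M])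
  have "(0 - p (lc 1 (\<lambda>j. 0) (-1) v)) / 1 \<in> L"
    unfolding L_def by (rule CollectI, rule exI[of _ "\<lambda>j. 0"], rule exI[of _ 0], rule exI[of _ 1]) (use z in simp)
  then have Lne: "L \<noteq> {}" by blast
  have Lbdd: "bdd_above L"
    unfolding bdd_above_def
  proof (rule exI[of _ "(p (lc 1 (\<lambda>j. 0) 1 v) - 0) / 1"], rule ballI)
    fix y assume "y \<in> L"
    then obtain u a s where "y = (a - p (lc 1 u (-s) v)) / s" "(u, a) \<in> M" "s > 0" unfolding L_def by blast
    then show "y \<le> (p (lc 1 (\<lambda>j. 0) 1 v) - 0) / 1" using K[OF z, of u a 1 s] by simp
  qed
  define c where "c = Sup L"
  have c_up: "c \<le> (p (lc 1 u s v) - a) / s" if us: "(u, a) \<in> M" "s > 0" for u a s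
    unfolding c_def
  proof (rule cSup_least[OF Lne])
    fix y assume "y \<in> L"
    then obtain u' a' s' where "y = (a' - p (lc 1 u' (-s') v)) / s'" "(u', a') \<in> M" "s' > 0" unfolding L_def by blast
    then show "y \<le> (p (lc 1 u s v) - a) / s" using K[OF us(1) _ us(2)] by blast
  qed
  have c_lo: "(a - p (lc 1 u (-s) v)) / s \<le> c" if us: "(u, a) \<in> M" "s > 0" for u a s
  proof -
    have "(a - p (lc 1 u (-s) v)) / s \<in> L" unfolding L_def using us by blast
    then show ?thesis unfolding c_def by (rule cSup_upper[OF _ Lbdd])
  qed
  define G where "G = {(lc 1 u t v, a + t * c) | u a t. (u, a) \<in> M}"
  have MG: "M \<subseteq> G"
  proof
    fix x assume "x \<in> M"
    then obtain u a where x: "x = (u, a)" "(u, a) \<in> M" by (cases x) auto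
    show "x \<in> G" unfolding G_def
      by (rule CollectI, rule exI[of _ u], rule exI[of _ a], rule exI[of _ 0]) (use x in simp)
  qed
  have vG: "(v, c) \<in> G" unfolding G_def
    by (rule CollectI, rule exI[of _ "\<lambda>j. 0"], rule exI[of _ 0], rule exI[of _ 1]) (use z in simp)
  have "good G"
  proof (rule goodI)
    fix x a assume "(x, a) \<in> G"
    then obtain u a0 t where "x = lc 1 u t v" "(u, a0) \<in> M" unfolding G_def by blast
    then show "x \<in> W" using subspD[OF W MW v] by blast
  next
    fix x a y b \<alpha> \<beta> assume "(x, a) \<in> G" "(y, b) \<in> G"
    then obtain u a0 t u' a0' t' where x: "x = lc 1 u t v" "a = a0 + t * c" "(u, a0) \<in> M"
      and y: "y = lc 1 u' t' v" "b = a0' + t' * c" "(u', a0') \<in> M" unfolding G_def by blast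
    have "(lc \<alpha> u \<beta> u', \<alpha> * a0 + \<beta> * a0') \<in> M" using Mlin[OF x(3) y(3)] .
    moreover have "lc \<alpha> x \<beta> y = lc 1 (lc \<alpha> u \<beta> u') (\<alpha> * t + \<beta> * t') v"
      unfolding x y by (simp add: fun_eq_iff algebra_simps)
    moreover have "\<alpha> * a + \<beta> * b = (\<alpha> * a0 + \<beta> * a0') + (\<alpha> * t + \<beta> * t') * c"
      unfolding x y by (simp add: algebra_simps)
    ultimately show "(lc \<alpha> x \<beta> y, \<alpha> * a + \<beta> * b) \<in> G" unfolding G_def
      by (intro CollectI exI[of _ "lc \<alpha> u \<beta> u'"] exI[of _ "\<alpha> * a0 + \<beta> * a0'"] exI[of _ "\<alpha> * t + \<beta> * t'"]) simp
  next
    fix x a b assume "(x, a) \<in> G" "(x, b) \<in> G"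
    then obtain u a0 t u' a0' t' where x: "x = lc 1 u t v" "a = a0 + t * c" "(u, a0) \<in> M"
      and y: "x = lc 1 u' t' v" "b = a0' + t' * c" "(u', a0') \<in> M" unfolding G_def by blast
    have eq: "u j + t * v j = u' j + t' * v j" for j
    proof -
      have "lc 1 u t v = lc 1 u' t' v" using x(1) y(1) by simp
      from fun_cong[OF this, of j] show ?thesis by simp
    qed
    show "a = b"
    proof (cases "t = t'")
      case True
      then have "u = u'" using eq by (auto simp: fun_eq_iff)
      then show ?thesis using Mfun[OF x(3)] y(3) x(2) y(2) True by simp
    next
      case False
      let ?d = "1 / (t' - t)"
      have "(lc ?d u (-?d) u', ?d * a0 + (-?d) * a0') \<in> M" using Mlin[OF x(3) y(3)] .
      moreover have "lc ?d u (-?d) u' = v"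
      proof
        fix j
        have "u j - u' j = (t' - t) * v j" using eq[of j] by (simp add: algebra_simps)
        have "?d * u j + (-?d) * u' j = (u j - u' j) / (t' - t)" by (simp add: diff_divide_distrib)
        also have "\<dots> = v j" using False \<open>u j - u' j = (t' - t) * v j\<close> by simp
        finally show "?d * u j + (-?d) * u' j = v j" .
      qed
      ultimately show ?thesis using nv by metis
    qed
  next
    fix u assume "u \<in> S"
    then have "(u, f u) \<in> M" using goodD(4)[OF M] by blast
    then show "(u, f u) \<in> G" using MG by blast
  next
    fix x a assume "(x, a) \<in> G"
    then obtain u a0 t where x: "x = lc 1 u t v" "a = a0 + t * c" "(u, a0) \<in> M" unfolding G_def by blast
    consider "t > 0" | "t = 0" | "t < 0" by linarith
    then show "a \<le> p x"
    proof cases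
      case 1
      have "c \<le> (p (lc 1 u t v) - a0) / t" by (rule c_up[OF x(3) 1])
      then have "t * c \<le> p (lc 1 u t v) - a0" using 1 by (simp add: field_simps)
      then show ?thesis using x by simp
    next
      case 2
      then show ?thesis using x Mdom[OF x(3)] by simp
    next
      case 3
      have "(a0 - p (lc 1 u (-(-t)) v)) / (-t) \<le> c" by (rule c_lo[OF x(3)]) (use 3 in simp)
      then have "a0 - p (lc 1 u t v) \<le> (-t) * c" using 3 by (simp add: field_simps)
      then show ?thesis using x by (simp add: algebra_simps)
    qed
  qed
  moreover have "G \<noteq> M" using vG nv by blast
  ultimately show ?thesis using MG by blast
qed

theorem hahn_banach_cvx:
  "\<exists>F. linon W F \<and> (\<forall>u\<in>S. F u = f u) \<and> (\<forall>u\<in>W. F u \<le> p u)"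
proof -
  have "\<exists>M\<in>{G. good G}. \<forall>X\<in>{G. good G}. M \<subseteq> X \<longrightarrow> X = M"
  proof (rule Zorn_Lemma2, intro ballI)
    fix C assume C: "C \<in> chains {G. good G}"
    show "\<exists>U\<in>{G. good G}. \<forall>X\<in>C. X \<subseteq> U"
    proof (cases "C = {}")
      case True then show ?thesis using good_G0 by auto
    next
      case False then show ?thesis using good_Union[OF C False] by auto
    qed
  qed
  then obtain M where M: "good M" and max: "\<And>X. good X \<Longrightarrow> M \<subseteq> X \<Longrightarrow> X = M" by blast
  have dom: "\<exists>a. (u, a) \<in> M" if "u \<in> W" for u
    using good_extend[OF M that] max by blast
  define F where "F u = (THE a. (u, a) \<in> M)" for u
  note Mfun = goodD(3)[OF M]
  have FM: "(u, F u) \<in> M" if uW: "u \<in> W" for u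
  proof -
    obtain a where a: "(u, a) \<in> M" using dom[OF uW] by blast
    have "F u = a" unfolding F_def by (rule the_equality[where P="\<lambda>a. (u, a) \<in> M", OF a]) (use Mfun a in blast)
    then show ?thesis using a by simp
  qed
  have Fval: "F u = a" if ua: "(u, a) \<in> M" for u a
    unfolding F_def by (rule the_equality[where P="\<lambda>a. (u, a) \<in> M", OF ua]) (use Mfun ua in blast)
  show ?thesis
  proof (intro exI conjI ballI allI)
    show "linon W F" unfolding linon_def
    proof (intro ballI allI)
      fix u v a b assume "u \<in> W" "v \<in> W"
      then have "(lc a u b v, a * F u + b * F v) \<in> M" using goodD(2)[OF M] FM by blast
      then show "F (lc a u b v) = a * F u + b * F v" by (rule Fval)
    qed
  next
    fix u assume "u \<in> S"
    then have "(u, f u) \<in> M" using goodD(4)[OF M] by blast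
    then show "F u = f u" by (rule Fval)
  next
    fix u assume "u \<in> W"
    then show "F u \<le> p u" using FM goodD(5)[OF M] by blast
  qed
qed

end


definition parts :: "nat set set set" where
  "parts = {P. finite P \<and> partition_on UNIV P}"

definition lsum :: "seq \<Rightarrow> setfun \<Rightarrow> nat set set \<Rightarrow> real" where
  "lsum x \<mu> P = (\<Sum>A\<in>P. Inf (x ` A) * \<mu> A)"

definition usum :: "seq \<Rightarrow> setfun \<Rightarrow> nat set set \<Rightarrow> real" where
  "usum x \<mu> P = (\<Sum>A\<in>P. Sup (x ` A) * \<mu> A)"

lemma pairing_alt: "pairing x \<mu> = (SUP P\<in>parts. lsum x \<mu> P)"
  by (simp add: pairing_def parts_def lsum_def)

lemma linf_bound: assumes "x \<in> linf" obtains B where "\<And>n. \<bar>x n\<bar> \<le> B"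
  using assms unfolding linf_def bounded_iff by auto

lemma linf_bdd: assumes "x \<in> linf" shows "bdd_below (x ` A)" "bdd_above (x ` A)"
proof -
  obtain B where B: "\<And>n. \<bar>x n\<bar> \<le> B" using linf_bound[OF assms] by blast
  show "bdd_below (x ` A)"
  proof (rule bdd_belowI[of _ "-B"])
    fix v assume "v \<in> x ` A" then obtain n where "v = x n" by auto
    then show "-B \<le> v" using B[of n] by linarith
  qed
  show "bdd_above (x ` A)"
  proof (rule bdd_aboveI[of _ "B"])
    fix v assume "v \<in> x ` A" then obtain n where "v = x n" by auto
    then show "v \<le> B" using B[of n] by linarith
  qed
qed

lemma fa_nonneg: "\<mu> \<in> fa_prob \<Longrightarrow> \<mu> A \<ge> 0" by (simp add: fa_prob_def)
lemma fa_univ: "\<mu> \<in> fa_prob \<Longrightarrow> \<mu> UNIV = 1" by (simp add: fa_prob_def)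
lemma fa_add: "\<mu> \<in> fa_prob \<Longrightarrow> A \<inter> B = {} \<Longrightarrow> \<mu> (A \<union> B) = \<mu> A + \<mu> B"
  by (simp add: fa_prob_def)
lemma fa_empty: "\<mu> \<in> fa_prob \<Longrightarrow> \<mu> {} = 0"
  using fa_add[of \<mu> "{}" "{}"] by simp

lemma fa_sum:
  assumes mu: "\<mu> \<in> fa_prob" and "finite F" and "disjoint F"
  shows "\<mu> (\<Union>F \<inter> B) = (\<Sum>A\<in>F. \<mu> (A \<inter> B))"
  using assms(2,3)
proof (induction F rule: finite_induct)
  case empty then show ?case using fa_empty[OF mu] by simp
next
  case (insert A F)
  have dF: "disjoint F" using insert.prems by (auto simp: disjoint_def)
  have "\<Union>(insert A F) \<inter> B = (A \<inter> B) \<union> (\<Union>F \<inter> B)" by auto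
  moreover have "(A \<inter> B) \<inter> (\<Union>F \<inter> B) = {}"
    using insert.prems insert.hyps by (auto simp: disjoint_def)
  ultimately have "\<mu> (\<Union>(insert A F) \<inter> B) = \<mu> (A \<inter> B) + \<mu> (\<Union>F \<inter> B)"
    using fa_add[OF mu] by simp
  then show ?case using insert dF by simp
qed

lemma parts_sum: assumes mu: "\<mu> \<in> fa_prob" and P: "P \<in> parts"
  shows "(\<Sum>A\<in>P. \<mu> (A \<inter> B)) = \<mu> B"
proof -
  have "finite P" "disjoint P" "\<Union>P = UNIV" using P by (auto simp: parts_def partition_on_def)
  then show ?thesis using fa_sum[OF mu, of P B] by simp
qed

lemma parts_sum1: assumes mu: "\<mu> \<in> fa_prob" and P: "P \<in> parts"
  shows "(\<Sum>A\<in>P. \<mu> A) = 1"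
  using parts_sum[OF assms, of UNIV] fa_univ[OF mu] by simp

lemma parts_nonempty: "P \<in> parts \<Longrightarrow> A \<in> P \<Longrightarrow> A \<noteq> {}"
  by (auto simp: parts_def partition_on_def)

lemma parts_finite: "P \<in> parts \<Longrightarrow> finite P" by (simp add: parts_def)

lemma parts_cover: "P \<in> parts \<Longrightarrow> \<exists>A\<in>P. n \<in> A"
  by (auto simp: parts_def partition_on_def)

lemma parts_disj: "P \<in> parts \<Longrightarrow> A \<in> P \<Longrightarrow> B \<in> P \<Longrightarrow> n \<in> A \<Longrightarrow> n \<in> B \<Longrightarrow> A = B"
  by (auto simp: parts_def partition_on_def disjoint_def)

lemma UNIV_parts: "{UNIV} \<in> parts"
  by (simp add: parts_def partition_on_def disjoint_def)

lemma lsum_le_usum: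
  assumes x: "x \<in> linf" and mu: "\<mu> \<in> fa_prob" and P: "P \<in> parts" and Q: "Q \<in> parts"
  shows "lsum x \<mu> P \<le> usum x \<mu> Q"
proof -
  have "lsum x \<mu> P = (\<Sum>A\<in>P. \<Sum>B\<in>Q. Inf (x ` A) * \<mu> (B \<inter> A))"
    unfolding lsum_def by (intro sum.cong refl) (simp add: sum_distrib_left[symmetric] parts_sum[OF mu Q])
  also have "\<dots> \<le> (\<Sum>A\<in>P. \<Sum>B\<in>Q. Sup (x ` B) * \<mu> (B \<inter> A))"
  proof (intro sum_mono)
    fix A B assume AP: "A \<in> P" and BQ: "B \<in> Q"
    show "Inf (x ` A) * \<mu> (B \<inter> A) \<le> Sup (x ` B) * \<mu> (B \<inter> A)"
    proof (cases "B \<inter> A = {}")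
      case True then show ?thesis using fa_empty[OF mu] by simp
    next
      case False
      then obtain n where n: "n \<in> A" "n \<in> B" by auto
      have "Inf (x ` A) \<le> x n" using n linf_bdd[OF x] by (intro cInf_lower) auto
      also have "x n \<le> Sup (x ` B)" using n linf_bdd[OF x] by (intro cSup_upper) auto
      finally show ?thesis using fa_nonneg[OF mu] by (intro mult_right_mono) auto
    qed
  qed
  also have "\<dots> = (\<Sum>B\<in>Q. \<Sum>A\<in>P. Sup (x ` B) * \<mu> (A \<inter> B))"
    by (subst sum.swap) (simp add: Int_commute)
  also have "\<dots> = usum x \<mu> Q"
    unfolding usum_def by (intro sum.cong refl) (simp add: sum_distrib_left[symmetric] parts_sum[OF mu P])
  finally show ?thesis .
qed

lemma lsum_bdd: assumes x: "x \<in> linf" and mu: "\<mu> \<in> fa_prob"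
  shows "bdd_above ((\<lambda>P. lsum x \<mu> P) ` parts)"
  using lsum_le_usum[OF x mu _ UNIV_parts] by (intro bdd_aboveI) blast

lemma pairing_ge_lsum: assumes x: "x \<in> linf" and mu: "\<mu> \<in> fa_prob" and P: "P \<in> parts"
  shows "lsum x \<mu> P \<le> pairing x \<mu>"
  unfolding pairing_alt using lsum_bdd[OF x mu] P by (intro cSUP_upper) auto

lemma pairing_le_usum: assumes x: "x \<in> linf" and mu: "\<mu> \<in> fa_prob" and P: "P \<in> parts"
  shows "pairing x \<mu> \<le> usum x \<mu> P"
  unfolding pairing_alt using lsum_le_usum[OF x mu _ P] UNIV_parts
  by (intro cSUP_least) auto

definition tag :: "nat set \<Rightarrow> nat" where "tag A = (SOME n. n \<in> A)"

lemma tag_in: "A \<noteq> {} \<Longrightarrow> tag A \<in> A"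
  unfolding tag_def by (rule someI_ex) auto

definition tsum :: "seq \<Rightarrow> setfun \<Rightarrow> nat set set \<Rightarrow> real" where
  "tsum x \<mu> P = (\<Sum>A\<in>P. x (tag A) * \<mu> A)"

definition fineP :: "seq \<Rightarrow> real \<Rightarrow> nat set set \<Rightarrow> bool" where
  "fineP x e P \<longleftrightarrow> (\<forall>A\<in>P. \<forall>n\<in>A. \<forall>m\<in>A. \<bar>x n - x m\<bar> \<le> e)"

lemma pairing_tsum:
  assumes x: "x \<in> linf" and mu: "\<mu> \<in> fa_prob" and P: "P \<in> parts" and f: "fineP x e P"
  shows "\<bar>pairing x \<mu> - tsum x \<mu> P\<bar> \<le> e"
proof -
  have 1: "lsum x \<mu> P \<le> tsum x \<mu> P" unfolding lsum_def tsum_def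
  proof (intro sum_mono mult_right_mono)
    fix A assume "A \<in> P"
    then have "tag A \<in> A" using tag_in parts_nonempty[OF P] by blast
    then show "Inf (x ` A) \<le> x (tag A)" using linf_bdd[OF x] by (intro cInf_lower) auto
  qed (use fa_nonneg[OF mu] in auto)
  have 2: "tsum x \<mu> P \<le> usum x \<mu> P" unfolding usum_def tsum_def
  proof (intro sum_mono mult_right_mono)
    fix A assume "A \<in> P"
    then have "tag A \<in> A" using tag_in parts_nonempty[OF P] by blast
    then show "x (tag A) \<le> Sup (x ` A)" using linf_bdd[OF x] by (intro cSup_upper) auto
  qed (use fa_nonneg[OF mu] in auto)
  have 3: "usum x \<mu> P \<le> lsum x \<mu> P + e"
  proof -
    have "usum x \<mu> P \<le> (\<Sum>A\<in>P. (Inf (x ` A) + e) * \<mu> A)" unfolding usum_def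
    proof (intro sum_mono mult_right_mono)
      fix A assume AP: "A \<in> P"
      then have ne: "A \<noteq> {}" using parts_nonempty[OF P] by blast
      have "Sup (x ` A) - e \<le> Inf (x ` A)"
      proof (rule cInf_greatest)
        show "x ` A \<noteq> {}" using ne by simp
        fix v assume "v \<in> x ` A"
        then obtain m where m: "m \<in> A" "v = x m" by auto
        have "Sup (x ` A) \<le> x m + e"
        proof (rule cSup_least)
          show "x ` A \<noteq> {}" using ne by simp
          fix w assume "w \<in> x ` A"
          then obtain n where "n \<in> A" "w = x n" by auto
          then show "w \<le> x m + e" using f AP m unfolding fineP_def by force
        qed
        then show "Sup (x ` A) - e \<le> v" using m by simp
      qed
      then show "Sup (x ` A) \<le> Inf (x ` A) + e" by simp
    qed (use fa_nonneg[OF mu] in auto)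
    also have "\<dots> = lsum x \<mu> P + e * (\<Sum>A\<in>P. \<mu> A)"
      unfolding lsum_def by (simp add: distrib_right sum.distrib sum_distrib_left)
    finally show ?thesis using parts_sum1[OF mu P] by simp
  qed
  have "lsum x \<mu> P \<le> pairing x \<mu>" "pairing x \<mu> \<le> usum x \<mu> P"
    using pairing_ge_lsum[OF x mu P] pairing_le_usum[OF x mu P] by auto
  with 1 2 3 show ?thesis by linarith
qed

definition fibs :: "(nat \<Rightarrow> 'b) \<Rightarrow> nat set set" where
  "fibs g = (\<lambda>b. g -` {b}) ` range g"

lemma fibs_parts: assumes "finite (range g)" shows "fibs g \<in> parts"
  unfolding parts_def fibs_def partition_on_def disjoint_def using assms by auto

lemma fibs_same: "A \<in> fibs g \<Longrightarrow> n \<in> A \<Longrightarrow> m \<in> A \<Longrightarrow> g n = g m"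
  unfolding fibs_def by auto

definition flr :: "real \<Rightarrow> seq \<Rightarrow> nat \<Rightarrow> int" where
  "flr e x n = \<lfloor>x n / e\<rfloor>"

lemma flr_finite: assumes x: "x \<in> linf" and e: "e > 0" shows "finite (range (flr e x))"
proof -
  obtain B where B: "\<And>n. \<bar>x n\<bar> \<le> B" using linf_bound[OF x] by blast
  have "range (flr e x) \<subseteq> {\<lfloor>-B/e\<rfloor>..\<lceil>B/e\<rceil>}"
  proof
    fix k assume "k \<in> range (flr e x)"
    then obtain n where k: "k = \<lfloor>x n / e\<rfloor>" by (auto simp: flr_def)
    have h1: "-B \<le> x n" "x n \<le> B" using B[of n] by linarith+
    have h2: "(-B)/e \<le> x n / e" "x n / e \<le> B/e" using h1 e divide_right_mono[of "-B" "x n" e] divide_right_mono[of "x n" B e] by auto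
    have "\<lfloor>(-B)/e\<rfloor> \<le> k" unfolding k by (rule floor_mono[OF h2(1)])
    moreover have "k \<le> \<lceil>B/e\<rceil>"
    proof -
      have "of_int k \<le> x n / e" unfolding k by simp
      also have "\<dots> \<le> of_int \<lceil>B/e\<rceil>" using h2(2) le_of_int_ceiling order_trans by blast
      finally show ?thesis by linarith
    qed
    ultimately show "k \<in> {\<lfloor>-B/e\<rfloor>..\<lceil>B/e\<rceil>}" by simp
  qed
  then show ?thesis using finite_subset by blast
qed

lemma flr_close: assumes e: "e > 0" and "flr e x n = flr e x m" shows "\<bar>x n - x m\<bar> \<le> e"
proof -
  let ?k = "\<lfloor>x n / e\<rfloor>"
  have "of_int ?k \<le> x n / e" "x n / e < of_int ?k + 1" by linarith+
  moreover have "of_int ?k \<le> x m / e" "x m / e < of_int ?k + 1" using assms(2) unfolding flr_def by linarith+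
  ultimately have "\<bar>x n / e - x m / e\<bar> \<le> 1" by linarith
  then have "\<bar>x n - x m\<bar> / e \<le> 1" using e by (simp add: diff_divide_distrib[symmetric] abs_divide)
  then show ?thesis using e by (simp add: divide_le_eq)
qed


lemma small_zero: assumes "\<And>e. e > 0 \<Longrightarrow> \<bar>d\<bar> \<le> C * e" and "C \<ge> 0" shows "d = (0::real)"
proof (rule ccontr)
  assume "d \<noteq> 0"
  then have "\<bar>d\<bar> > 0" by simp
  let ?e = "\<bar>d\<bar> / (2 * (C + 1))"
  have e: "?e > 0" using \<open>\<bar>d\<bar> > 0\<close> assms(2) by simp
  have "\<bar>d\<bar> \<le> C * ?e" using assms(1)[OF e] .
  also have "\<dots> = \<bar>d\<bar> * (C / (2 * (C + 1)))" by simp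
  also have "\<dots> < \<bar>d\<bar> * 1"
  proof (rule mult_strict_left_mono)
    show "C / (2 * (C + 1)) < 1" using assms(2) by (simp add: divide_less_eq)
  qed (use \<open>\<bar>d\<bar> > 0\<close> in auto)
  finally show False by simp
qed

lemma small_le: assumes "\<And>e. e > 0 \<Longrightarrow> a \<le> b + C * e" and "C \<ge> 0" shows "a \<le> (b::real)"
proof (rule ccontr)
  assume "\<not> a \<le> b"
  let ?e = "(a - b) / (2 * (C + 1))"
  have e: "?e > 0" using \<open>\<not> a \<le> b\<close> assms(2) by simp
  have "a \<le> b + C * ?e" using assms(1)[OF e] .
  moreover have "C * ?e < a - b"
  proof -
    have "C * ?e = (a - b) * (C / (2 * (C + 1)))" by simp
    also have "\<dots> < (a - b) * 1"
    proof (rule mult_strict_left_mono)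
      show "C / (2 * (C + 1)) < 1" using assms(2) by (simp add: divide_less_eq)
    qed (use \<open>\<not> a \<le> b\<close> in auto)
    finally show ?thesis by simp
  qed
  ultimately show False by simp
qed

lemma linf_bounded: assumes "\<And>n. \<bar>x n\<bar> \<le> B" shows "x \<in> linf"
  unfolding linf_def bounded_iff mem_Collect_eq by (rule exI[of _ B]) (use assms in auto)

lemma linf_lc: "x \<in> linf \<Longrightarrow> y \<in> linf \<Longrightarrow> (\<lambda>n. a * x n + b * y n) \<in> linf"
proof -
  assume x: "x \<in> linf" and y: "y \<in> linf"
  obtain B where B: "\<And>n. \<bar>x n\<bar> \<le> B" using linf_bound[OF x] by blast
  obtain C where C: "\<And>n. \<bar>y n\<bar> \<le> C" using linf_bound[OF y] by blast
  have "\<bar>a * x n + b * y n\<bar> \<le> \<bar>a\<bar> * B + \<bar>b\<bar> * C" for n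
  proof -
    have "\<bar>a * x n + b * y n\<bar> \<le> \<bar>a\<bar> * \<bar>x n\<bar> + \<bar>b\<bar> * \<bar>y n\<bar>"
      by (metis abs_mult abs_triangle_ineq)
    also have "\<dots> \<le> \<bar>a\<bar> * B + \<bar>b\<bar> * C"
      using B[of n] C[of n] by (intro add_mono mult_left_mono) auto
    finally show ?thesis .
  qed
  then show ?thesis by (rule linf_bounded)
qed

lemma linf_cst: "cst t \<in> linf"
  by (rule linf_bounded[of _ "\<bar>t\<bar>"]) (simp add: cst_def)

lemma linf_const: "(\<lambda>n. t) \<in> linf"
  using linf_cst[of t] by (simp add: cst_def)

lemma linf_ind: "(indicator A :: seq) \<in> linf"
  by (rule linf_bounded[of _ 1]) (simp add: indicator_def)


lemma linf_add: "x \<in> linf \<Longrightarrow> y \<in> linf \<Longrightarrow> (\<lambda>n. x n + y n) \<in> linf"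
  using linf_lc[of x y 1 1] by simp

lemma linf_diff: "x \<in> linf \<Longrightarrow> y \<in> linf \<Longrightarrow> (\<lambda>n. x n - y n) \<in> linf"
  using linf_lc[of x y 1 "-1"] by simp

lemma linf_scale: "x \<in> linf \<Longrightarrow> (\<lambda>n. a * x n) \<in> linf"
  using linf_lc[of x x a 0] by simp

lemma linf_plusc: "x \<in> linf \<Longrightarrow> (\<lambda>n. x n + t) \<in> linf"
  using linf_add[OF _ linf_const] by simp

lemma linf_shift: "x \<in> linf \<Longrightarrow> (\<lambda>n. x (Suc n)) \<in> linf"
proof -
  assume x: "x \<in> linf"
  obtain B where "\<And>n. \<bar>x n\<bar> \<le> B" using linf_bound[OF x] by blast
  then show ?thesis by (intro linf_bounded[of _ B]) auto
qed

lemma linf_delay: "x \<in> linf \<Longrightarrow> delay x \<in> linf"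
proof -
  assume x: "x \<in> linf"
  obtain B where B: "\<And>n. \<bar>x n\<bar> \<le> B" using linf_bound[OF x] by blast
  then have "B \<ge> 0" using abs_ge_zero order_trans by blast
  then show ?thesis using B by (intro linf_bounded[of _ B]) (auto simp: delay_def)
qed

lemma joint_parts: assumes x: "x \<in> linf" and y: "y \<in> linf" and e: "e > 0"
  obtains P where "P \<in> parts" "fineP x e P" "fineP y e P"
proof -
  let ?g = "\<lambda>n. (flr e x n, flr e y n)"
  have "range ?g \<subseteq> range (flr e x) \<times> range (flr e y)" by auto
  then have "finite (range ?g)" using flr_finite[OF x e] flr_finite[OF y e]
    by (meson finite_SigmaI finite_subset)
  then have "fibs ?g \<in> parts" by (rule fibs_parts)
  moreover have "fineP x e (fibs ?g)" "fineP y e (fibs ?g)" unfolding fineP_def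
  proof (safe)
    fix A n m assume "A \<in> fibs ?g" "n \<in> A" "m \<in> A"
    then have "?g n = ?g m" by (rule fibs_same)
    then have "flr e x n = flr e x m" "flr e y n = flr e y m" by auto
    then show "\<bar>x n - x m\<bar> \<le> e" "\<bar>y n - y m\<bar> \<le> e" using flr_close[OF e] by blast+
  qed
  ultimately show ?thesis using that by blast
qed

lemma fine_lc: assumes "fineP x e P" "fineP y e P"
  shows "fineP (\<lambda>n. a * x n + b * y n) ((\<bar>a\<bar> + \<bar>b\<bar>) * e) P"
  unfolding fineP_def
proof (intro ballI)
  fix A n m assume "A \<in> P" "n \<in> A" "m \<in> A"
  then have h: "\<bar>x n - x m\<bar> \<le> e" "\<bar>y n - y m\<bar> \<le> e" using assms unfolding fineP_def by blast+
  have "\<bar>(a * x n + b * y n) - (a * x m + b * y m)\<bar> = \<bar>a * (x n - x m) + b * (y n - y m)\<bar>"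
    by (simp add: algebra_simps)
  also have "\<dots> \<le> \<bar>a\<bar> * \<bar>x n - x m\<bar> + \<bar>b\<bar> * \<bar>y n - y m\<bar>"
    by (metis abs_mult abs_triangle_ineq)
  also have "\<dots> \<le> \<bar>a\<bar> * e + \<bar>b\<bar> * e" using h by (intro add_mono mult_left_mono) auto
  finally show "\<bar>a * x n + b * y n - (a * x m + b * y m)\<bar> \<le> (\<bar>a\<bar> + \<bar>b\<bar>) * e"
    by (simp add: algebra_simps)
qed

lemma tsum_lc: "tsum (\<lambda>n. a * x n + b * y n) \<mu> P = a * tsum x \<mu> P + b * tsum y \<mu> P"
  unfolding tsum_def by (simp add: sum.distrib sum_distrib_left algebra_simps)

lemma pairing_lin: assumes x: "x \<in> linf" and y: "y \<in> linf" and mu: "\<mu> \<in> fa_prob"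
  shows "pairing (\<lambda>n. a * x n + b * y n) \<mu> = a * pairing x \<mu> + b * pairing y \<mu>"
proof -
  let ?z = "\<lambda>n. a * x n + b * y n"
  have "pairing ?z \<mu> - (a * pairing x \<mu> + b * pairing y \<mu>) = 0"
  proof (rule small_zero[of _ "2 * (\<bar>a\<bar> + \<bar>b\<bar>)"])
    fix e :: real assume e: "e > 0"
    obtain P where P: "P \<in> parts" "fineP x e P" "fineP y e P" using joint_parts[OF x y e] by blast
    have 1: "\<bar>pairing ?z \<mu> - tsum ?z \<mu> P\<bar> \<le> (\<bar>a\<bar> + \<bar>b\<bar>) * e"
      using pairing_tsum[OF linf_lc[OF x y] mu P(1) fine_lc[OF P(2,3)]] .
    have 2: "\<bar>pairing x \<mu> - tsum x \<mu> P\<bar> \<le> e" using pairing_tsum[OF x mu P(1,2)] .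
    have 3: "\<bar>pairing y \<mu> - tsum y \<mu> P\<bar> \<le> e" using pairing_tsum[OF y mu P(1,3)] .
    have "\<bar>a * (pairing x \<mu> - tsum x \<mu> P)\<bar> \<le> \<bar>a\<bar> * e" using 2 by (simp add: abs_mult mult_left_mono)
    moreover have "\<bar>b * (pairing y \<mu> - tsum y \<mu> P)\<bar> \<le> \<bar>b\<bar> * e" using 3 by (simp add: abs_mult mult_left_mono)
    ultimately show "\<bar>pairing ?z \<mu> - (a * pairing x \<mu> + b * pairing y \<mu>)\<bar> \<le> 2 * (\<bar>a\<bar> + \<bar>b\<bar>) * e"
      using 1 unfolding tsum_lc by (simp add: algebra_simps abs_le_iff; linarith)
  qed simp
  then show ?thesis by simp
qed

lemma pairing_mono: assumes x: "x \<in> linf" and y: "y \<in> linf" and mu: "\<mu> \<in> fa_prob"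
  and le: "\<And>n. x n \<le> y n"
  shows "pairing x \<mu> \<le> pairing y \<mu>"
proof (rule small_le[of _ _ 2])
  fix e :: real assume e: "e > 0"
  obtain P where P: "P \<in> parts" "fineP x e P" "fineP y e P" using joint_parts[OF x y e] by blast
  have "tsum x \<mu> P \<le> tsum y \<mu> P" unfolding tsum_def
    using le fa_nonneg[OF mu] by (intro sum_mono mult_right_mono) auto
  then show "pairing x \<mu> \<le> pairing y \<mu> + 2 * e"
    using pairing_tsum[OF x mu P(1,2)] pairing_tsum[OF y mu P(1,3)] by (simp add: abs_le_iff)
qed simp

lemma pairing_cst: assumes mu: "\<mu> \<in> fa_prob" shows "pairing (cst t) \<mu> = t"
proof -
  have "fineP (cst t) 0 {UNIV}" by (simp add: fineP_def cst_def)
  from pairing_tsum[OF linf_cst mu UNIV_parts this]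
  show ?thesis by (simp add: tsum_def cst_def fa_univ[OF mu])
qed

lemma pairing_const: "\<mu> \<in> fa_prob \<Longrightarrow> pairing (\<lambda>n. t) \<mu> = t"
  using pairing_cst[of \<mu> t] by (simp add: cst_def)

lemma pairing_add: "x \<in> linf \<Longrightarrow> y \<in> linf \<Longrightarrow> \<mu> \<in> fa_prob \<Longrightarrow>
   pairing (\<lambda>n. x n + y n) \<mu> = pairing x \<mu> + pairing y \<mu>"
  using pairing_lin[of x y \<mu> 1 1] by simp

lemma pairing_diff: "x \<in> linf \<Longrightarrow> y \<in> linf \<Longrightarrow> \<mu> \<in> fa_prob \<Longrightarrow>
   pairing (\<lambda>n. x n - y n) \<mu> = pairing x \<mu> - pairing y \<mu>"
  using pairing_lin[of x y \<mu> 1 "-1"] by simp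

lemma pairing_scale: "x \<in> linf \<Longrightarrow> \<mu> \<in> fa_prob \<Longrightarrow> pairing (\<lambda>n. a * x n) \<mu> = a * pairing x \<mu>"
  using pairing_lin[of x x \<mu> a 0] by simp

lemma pairing_plusc: "x \<in> linf \<Longrightarrow> \<mu> \<in> fa_prob \<Longrightarrow> pairing (\<lambda>n. x n + t) \<mu> = pairing x \<mu> + t"
  using pairing_add[where x=x and y="\<lambda>n. t" and \<mu>=\<mu>] linf_const[of t] pairing_const[where \<mu>=\<mu> and t=t] by simp

lemma fa_mix: assumes "\<mu> \<in> fa_prob" "\<nu> \<in> fa_prob" "0 \<le> t" "t \<le> 1"
  shows "(\<lambda>A. t * \<mu> A + (1 - t) * \<nu> A) \<in> fa_prob"
proof -
  have "0 \<le> t * \<mu> A + (1 - t) * \<nu> A" for A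
    using assms fa_nonneg[of \<mu> A] fa_nonneg[of \<nu> A] by simp
  then show ?thesis using assms unfolding fa_prob_def by (auto simp: algebra_simps)
qed

lemma pairing_mix: assumes x: "x \<in> linf" and mu: "\<mu> \<in> fa_prob" and nu: "\<nu> \<in> fa_prob"
  and t: "0 \<le> t" "t \<le> 1"
  shows "pairing x (\<lambda>A. t * \<mu> A + (1 - t) * \<nu> A) = t * pairing x \<mu> + (1 - t) * pairing x \<nu>"
proof -
  let ?m = "\<lambda>A. t * \<mu> A + (1 - t) * \<nu> A"
  have m: "?m \<in> fa_prob" using fa_mix[OF mu nu t] .
  have "pairing x ?m - (t * pairing x \<mu> + (1 - t) * pairing x \<nu>) = 0"
  proof (rule small_zero[of _ 2])
    fix e :: real assume e: "e > 0"
    obtain P where P: "P \<in> parts" "fineP x e P" using joint_parts[OF x x e] by blast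
    have ts: "tsum x ?m P = t * tsum x \<mu> P + (1 - t) * tsum x \<nu> P"
      unfolding tsum_def sum_distrib_left sum.distrib[symmetric] by (intro sum.cong refl) (simp add: algebra_simps)
    have 1: "\<bar>pairing x ?m - tsum x ?m P\<bar> \<le> e" using pairing_tsum[OF x m P] .
    have 2: "\<bar>pairing x \<mu> - tsum x \<mu> P\<bar> \<le> e" using pairing_tsum[OF x mu P] .
    have 3: "\<bar>pairing x \<nu> - tsum x \<nu> P\<bar> \<le> e" using pairing_tsum[OF x nu P] .
    have "\<bar>t * (pairing x \<mu> - tsum x \<mu> P)\<bar> \<le> t * e" using 2 t by (simp add: abs_mult mult_left_mono)
    moreover have "\<bar>(1 - t) * (pairing x \<nu> - tsum x \<nu> P)\<bar> \<le> (1 - t) * e"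
      using 3 t by (simp add: abs_mult mult_left_mono)
    ultimately show "\<bar>pairing x ?m - (t * pairing x \<mu> + (1 - t) * pairing x \<nu>)\<bar> \<le> 2 * e"
      using 1 t unfolding ts by (simp add: algebra_simps abs_le_iff; linarith)
  qed simp
  then show ?thesis by simp
qed

lemma pairing_lip: assumes x: "x \<in> linf" and y: "y \<in> linf" and mu: "\<mu> \<in> fa_prob"
  and B: "\<And>n. \<bar>x n - y n\<bar> \<le> B"
  shows "\<bar>pairing x \<mu> - pairing y \<mu>\<bar> \<le> B"
proof -
  have h1: "x n \<le> y n + B" and h2: "y n \<le> x n + B" for n using B[of n] by (simp_all add: abs_le_iff)
  have "pairing x \<mu> \<le> pairing (\<lambda>n. y n + B) \<mu>"
    using h1 by (intro pairing_mono[OF x linf_plusc[OF y] mu])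
  moreover have "pairing y \<mu> \<le> pairing (\<lambda>n. x n + B) \<mu>"
    using h2 by (intro pairing_mono[OF y linf_plusc[OF x] mu])
  ultimately show ?thesis using pairing_plusc[OF x mu] pairing_plusc[OF y mu] by (simp add: abs_le_iff)
qed


context
  fixes \<Lambda> :: "seq \<Rightarrow> real"
  assumes lin: "linon linf \<Lambda>"
begin

lemma L_lc: "u \<in> linf \<Longrightarrow> v \<in> linf \<Longrightarrow> \<Lambda> (\<lambda>n. a * u n + b * v n) = a * \<Lambda> u + b * \<Lambda> v"
  using lin unfolding linon_def by blast

lemma L_add: "u \<in> linf \<Longrightarrow> v \<in> linf \<Longrightarrow> \<Lambda> (\<lambda>n. u n + v n) = \<Lambda> u + \<Lambda> v"
  using L_lc[of u v 1 1] by simp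

lemma L_diff: "u \<in> linf \<Longrightarrow> v \<in> linf \<Longrightarrow> \<Lambda> (\<lambda>n. u n - v n) = \<Lambda> u - \<Lambda> v"
  using L_lc[of u v 1 "-1"] by simp

lemma L_scale: "u \<in> linf \<Longrightarrow> \<Lambda> (\<lambda>n. a * u n) = a * \<Lambda> u"
  using L_lc[of u u a 0] by simp

lemma L_zero: "\<Lambda> (\<lambda>n. 0) = 0"
  using L_scale[OF linf_const[of 0], of 0] by simp

lemma linf_sum: "finite P \<Longrightarrow> (\<And>A. A \<in> P \<Longrightarrow> g A \<in> linf) \<Longrightarrow> (\<lambda>n. \<Sum>A\<in>P. g A n) \<in> linf"
proof (induction P rule: finite_induct)
  case empty then show ?case using linf_const[of 0] by simp
next
  case (insert B P)
  then have "(\<lambda>n. g B n + (\<Sum>A\<in>P. g A n)) \<in> linf" by (intro linf_add) auto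
  then show ?case using insert by simp
qed

lemma L_sum: "finite P \<Longrightarrow> (\<And>A. A \<in> P \<Longrightarrow> g A \<in> linf) \<Longrightarrow> \<Lambda> (\<lambda>n. \<Sum>A\<in>P. g A n) = (\<Sum>A\<in>P. \<Lambda> (g A))"
proof (induction P rule: finite_induct)
  case empty then show ?case using L_zero by simp
next
  case (insert B P)
  have "\<Lambda> (\<lambda>n. \<Sum>A\<in>insert B P. g A n) = \<Lambda> (\<lambda>n. g B n + (\<Sum>A\<in>P. g A n))"
    using insert by simp
  also have "\<dots> = \<Lambda> (g B) + \<Lambda> (\<lambda>n. \<Sum>A\<in>P. g A n)"
    using insert by (intro L_add linf_sum) auto
  finally show ?case using insert by simp
qed

context
  assumes pos: "\<And>y. y \<in> linf \<Longrightarrow> (\<And>n. y n \<ge> 0) \<Longrightarrow> \<Lambda> y \<ge> 0"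
    and one: "\<Lambda> (cst 1) = 1"
begin

lemma L_mono: "u \<in> linf \<Longrightarrow> v \<in> linf \<Longrightarrow> (\<And>n. u n \<le> v n) \<Longrightarrow> \<Lambda> u \<le> \<Lambda> v"
  using pos[of "\<lambda>n. v n - u n"] L_diff[of v u] linf_diff[of v u] by simp

lemma L_const: "\<Lambda> (\<lambda>n. t) = t"
proof -
  have "(\<lambda>n. t * cst 1 n) = (\<lambda>n. t)" by (simp add: cst_def)
  then show ?thesis using L_scale[OF linf_cst[of 1], of t] one by simp
qed

lemma L_fa: "(\<lambda>A. \<Lambda> (indicator A)) \<in> fa_prob"
  unfolding fa_prob_def
proof (intro CollectI conjI allI impI)
  fix A show "\<Lambda> (indicator A) \<ge> 0" using pos[OF linf_ind] by (simp add: indicator_def)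
next
  show "\<Lambda> (indicator UNIV) = 1" using one by (simp add: cst_def)
next
  fix A B :: "nat set" assume "A \<inter> B = {}"
  then have "(indicator (A \<union> B) :: seq) = (\<lambda>n. indicator A n + indicator B n)"
    by (auto simp: fun_eq_iff indicator_def)
  then show "\<Lambda> (indicator (A \<union> B)) = \<Lambda> (indicator A) + \<Lambda> (indicator B)"
    using L_add[OF linf_ind linf_ind] by simp
qed

lemma L_repr: assumes x: "x \<in> linf"
  shows "pairing x (\<lambda>A. \<Lambda> (indicator A)) = \<Lambda> x"
proof -
  let ?mu = "\<lambda>A. \<Lambda> (indicator A)"
  have "pairing x ?mu - \<Lambda> x = 0"
  proof (rule small_zero[of _ 2])
    fix e :: real assume e: "e > 0"
    obtain P where P: "P \<in> parts" "fineP x e P" using joint_parts[OF x x e] by blast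
    define s where "s = (\<lambda>n. \<Sum>A\<in>P. x (tag A) * indicator A n)"
    have fin: "finite P" using P(1) by (rule parts_finite)
    have sl: "s \<in> linf" unfolding s_def using fin by (intro linf_sum linf_scale linf_ind)
    have Ls: "\<Lambda> s = tsum x ?mu P"
      unfolding s_def tsum_def using fin
      by (subst L_sum) (auto intro: linf_scale linf_ind simp: L_scale[OF linf_ind])
    have close: "\<bar>x n - s n\<bar> \<le> e" for n
    proof -
      obtain A where A: "A \<in> P" "n \<in> A" using parts_cover[OF P(1)] by blast
      have "s n = (\<Sum>B\<in>P. if B = A then x (tag A) else 0)"
        unfolding s_def
      proof (intro sum.cong refl)
        fix B assume B: "B \<in> P"
        show "x (tag B) * indicator B n = (if B = A then x (tag A) else 0)"
        proof (cases "B = A")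
          case True then show ?thesis using A(2) by simp
        next
          case False
          then have "n \<notin> B" using parts_disj[OF P(1) A(1) B A(2)] by blast
          then show ?thesis using False by simp
        qed
      qed
      also have "\<dots> = x (tag A)" using A(1) fin by simp
      finally have "s n = x (tag A)" .
      moreover have "tag A \<in> A" using tag_in parts_nonempty[OF P(1) A(1)] by blast
      ultimately show ?thesis using P(2) A unfolding fineP_def by auto
    qed
    have c1: "x n \<le> s n + e" and c2: "s n \<le> x n + e" for n using close[of n] by (simp_all add: abs_le_iff)
    have "\<Lambda> x \<le> \<Lambda> (\<lambda>n. s n + e)"
      using c1 by (intro L_mono x linf_plusc sl)
    moreover have "\<Lambda> s \<le> \<Lambda> (\<lambda>n. x n + e)"
      using c2 by (intro L_mono x linf_plusc sl)
    ultimately have 1: "\<bar>\<Lambda> x - \<Lambda> s\<bar> \<le> e"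
      using L_add[OF sl linf_const, of e] L_add[OF x linf_const, of e] L_const[of e] by (simp add: abs_le_iff)
    have 2: "\<bar>pairing x ?mu - tsum x ?mu P\<bar> \<le> e" using pairing_tsum[OF x L_fa P] .
    show "\<bar>pairing x ?mu - \<Lambda> x\<bar> \<le> 2 * e" using 1 2 Ls by (simp add: abs_le_iff)
  qed simp
  then show ?thesis by simp
qed

end
end


lemma cst_apply: "cst t n = t" by (simp add: cst_def)

locale axR =
  fixes R :: "seq \<Rightarrow> seq \<Rightarrow> bool"
  assumes wo: "weak_order R" and mo: "monotonicity R" and co: "continuity R"
    and ic: "ICRP R" and cv: "convexity R" and id: "IDIS R" and ti: "time_invariance R"
begin

lemma complete: "x \<in> linf \<Longrightarrow> y \<in> linf \<Longrightarrow> R x y \<or> R y x"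
  using wo unfolding weak_order_def by blast

lemma trans: "x \<in> linf \<Longrightarrow> y \<in> linf \<Longrightarrow> z \<in> linf \<Longrightarrow> R x y \<Longrightarrow> R y z \<Longrightarrow> R x z"
  using wo unfolding weak_order_def by blast

lemma mono: "x \<in> linf \<Longrightarrow> y \<in> linf \<Longrightarrow> (\<And>n. y n \<le> x n) \<Longrightarrow> R x y"
  using mo unfolding monotonicity_def by blast

lemma refl: "x \<in> linf \<Longrightarrow> R x x"
  using mono by blast

lemma not01: "\<not> R (cst 0) (cst 1)"
  using mo unfolding monotonicity_def by blast

lemma icrp: "x \<in> linf \<Longrightarrow> y \<in> linf \<Longrightarrow> R x y \<Longrightarrow> R (\<lambda>n. x n + t) (\<lambda>n. y n + t)"
  using ic unfolding ICRP_def by blast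

lemma icrp_cst: "x \<in> linf \<Longrightarrow> R x (cst a) \<Longrightarrow> R (\<lambda>n. x n + t) (cst (a + t))"
  using icrp[OF _ linf_cst, of x a t] by (simp add: cst_def)

lemma icrp_cst2: "x \<in> linf \<Longrightarrow> R (cst a) x \<Longrightarrow> R (cst (a + t)) (\<lambda>n. x n + t)"
  using icrp[OF linf_cst, of x a t] by (simp add: cst_def)

lemma cst_le: assumes "R (cst b) (cst a)" shows "a \<le> b"
proof (rule ccontr)
  assume "\<not> a \<le> b"
  define h where "h = a - b"
  have h: "h > 0" using \<open>\<not> a \<le> b\<close> by (simp add: h_def)
  have "R (cst 0) (cst h)"
    using icrp[OF linf_cst linf_cst assms, of "-b"] by (simp add: cst_def h_def)
  have step: "R (cst 0) (cst (real k * h))" for k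
  proof (induction k)
    case 0 then show ?case using refl[OF linf_cst[of 0]] by (simp add: cst_def)
  next
    case (Suc k)
    have "R (cst h) (cst (real k * h + h))"
      using icrp[OF linf_cst linf_cst Suc, of h] by (simp add: cst_def)
    then have "R (cst 0) (cst (real k * h + h))"
      using trans[OF linf_cst linf_cst linf_cst \<open>R (cst 0) (cst h)\<close>] by blast
    then show ?case by (simp add: algebra_simps)
  qed
  obtain k :: nat where "1 / h \<le> real k" using real_arch_simple by blast
  then have "1 \<le> real k * h" using h by (simp add: field_simps)
  then have "R (cst (real k * h)) (cst 1)" by (intro mono linf_cst) (simp add: cst_apply)
  then have "R (cst 0) (cst 1)" using trans[OF linf_cst linf_cst linf_cst step] by blast
  then show False using not01 by simp
qed

lemma cst_iff: "R (cst b) (cst a) \<longleftrightarrow> a \<le> b"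
  using cst_le mono[OF linf_cst linf_cst] by (auto simp: cst_apply)

lemma ce_exists: assumes x: "x \<in> linf" shows "\<exists>t. R x (cst t) \<and> R (cst t) x"
proof -
  obtain B where B: "\<And>n. \<bar>x n\<bar> \<le> B" using linf_bound[OF x] by blast
  let ?m = "\<lambda>\<alpha>::real. (\<lambda>n. \<alpha> * cst B n + (1 - \<alpha>) * cst (-B) n)"
  have m: "?m \<alpha> = cst (\<alpha> * B + (1 - \<alpha>) * (-B))" for \<alpha> by (simp add: cst_def)
  have B1: "x n \<le> B" and B2: "-B \<le> x n" for n using B[of n] by (simp_all add: abs_le_iff)
  have RB: "R (cst B) x" using B1 by (intro mono linf_cst x) (simp add: cst_apply)
  have Rb: "R x (cst (-B))" using B2 by (intro mono linf_cst x) (simp add: cst_apply)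
  define T1 where "T1 = {\<alpha> \<in> {0..1}. R (?m \<alpha>) x}"
  define T2 where "T2 = {\<alpha> \<in> {0..1}. R x (?m \<alpha>)}"
  have cl: "closed T1" "closed T2" using co RB Rb linf_cst x unfolding continuity_def T1_def T2_def by blast+
  have "1 \<in> T1" using RB unfolding T1_def by (simp add: cst_def)
  moreover have "0 \<in> T2" using Rb unfolding T2_def by (simp add: cst_def)
  moreover have sub: "{0..1} \<subseteq> T1 \<union> T2"
    unfolding T1_def T2_def using complete[OF _ x] m linf_cst by auto
  ultimately have "T1 \<inter> T2 \<inter> {0..1} \<noteq> {}"
  proof -
    assume a1: "1 \<in> T1" and a2: "0 \<in> T2"
    show ?thesis
    proof
      assume h: "T1 \<inter> T2 \<inter> {0..1} = {}"
      have "T1 \<inter> {0..1} = {} \<or> T2 \<inter> {0..1::real} = {}"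
        by (rule connected_closedD[OF connected_Icc h sub cl(1) cl(2)])
      then show False using a1 a2 by auto
    qed
  qed
  then obtain \<alpha> where "\<alpha> \<in> T1" "\<alpha> \<in> T2" by blast
  then show ?thesis unfolding T1_def T2_def m by blast
qed

definition ce :: "seq \<Rightarrow> real" where
  "ce x = (SOME t. R x (cst t) \<and> R (cst t) x)"

lemma ce: "x \<in> linf \<Longrightarrow> R x (cst (ce x)) \<and> R (cst (ce x)) x"
  unfolding ce_def using ce_exists by (rule someI_ex) 

lemma ce_unique: assumes x: "x \<in> linf" and "R x (cst t)" "R (cst t) x" shows "ce x = t"
proof -
  have "R (cst (ce x)) (cst t)" using trans[OF linf_cst x linf_cst] ce[OF x] assms by blast
  moreover have "R (cst t) (cst (ce x))" using trans[OF linf_cst x linf_cst] ce[OF x] assms by blast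
  ultimately show ?thesis using cst_iff by (meson antisym)
qed

lemma rep: assumes x: "x \<in> linf" and y: "y \<in> linf" shows "R x y \<longleftrightarrow> ce y \<le> ce x"
proof
  assume "R x y"
  then have "R (cst (ce x)) (cst (ce y))"
    using trans[OF linf_cst x linf_cst] trans[OF x y linf_cst] ce[OF x] ce[OF y] by blast
  then show "ce y \<le> ce x" using cst_iff by blast
next
  assume "ce y \<le> ce x"
  then have "R (cst (ce x)) (cst (ce y))" using cst_iff by blast
  then show "R x y"
    using trans[OF x linf_cst y] trans[OF x linf_cst linf_cst] ce[OF x] ce[OF y] by blast
qed

lemma ce_cst: "ce (cst t) = t"
  using ce_unique[OF linf_cst refl[OF linf_cst] refl[OF linf_cst]] .

lemma ce_const: "ce (\<lambda>n. t) = t"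
  using ce_cst[of t] by (simp add: cst_def)

lemma ce_mono: "x \<in> linf \<Longrightarrow> y \<in> linf \<Longrightarrow> (\<And>n. x n \<le> y n) \<Longrightarrow> ce x \<le> ce y"
  using rep mono by blast

lemma ce_transl: assumes x: "x \<in> linf" shows "ce (\<lambda>n. x n + t) = ce x + t"
  using ce_unique[OF linf_plusc[OF x] icrp_cst[OF x] icrp_cst2[OF x]] ce[OF x] by blast

lemma ce_concave: assumes x: "x \<in> linf" and y: "y \<in> linf" and t: "0 \<le> t" "t \<le> 1"
  shows "t * ce x + (1 - t) * ce y \<le> ce (\<lambda>n. t * x n + (1 - t) * y n)"
proof -
  let ?x = "\<lambda>n. x n + - ce x" and ?y = "\<lambda>n. y n + - ce y"
  have x': "?x \<in> linf" "ce ?x = 0" using linf_plusc[OF x, of "- ce x"] ce_transl[OF x, of "- ce x"] by auto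
  have y': "?y \<in> linf" "ce ?y = 0" using linf_plusc[OF y, of "- ce y"] ce_transl[OF y, of "- ce y"] by auto
  have "R ?x (cst 0)" "R ?y (cst 0)" using rep[OF x'(1) linf_cst] rep[OF y'(1) linf_cst] x' y' ce_cst by auto
  then have "R (\<lambda>n. t * ?x n + (1 - t) * ?y n) (cst 0)"
    using cv x'(1) y'(1) t unfolding convexity_def by auto
  moreover have "(\<lambda>n. t * ?x n + (1 - t) * ?y n) = (\<lambda>n. (t * x n + (1 - t) * y n) + - (t * ce x + (1 - t) * ce y))"
    by (simp add: fun_eq_iff algebra_simps)
  moreover have z: "(\<lambda>n. t * x n + (1 - t) * y n) \<in> linf" by (rule linf_lc[OF x y])
  ultimately have "R (\<lambda>n. (t * x n + (1 - t) * y n) + - (t * ce x + (1 - t) * ce y)) (cst 0)" by simp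
  then have "0 \<le> ce (\<lambda>n. (t * x n + (1 - t) * y n) + - (t * ce x + (1 - t) * ce y))"
    using rep[OF linf_plusc[OF z] linf_cst] ce_cst by auto
  then show ?thesis using ce_transl[OF z] by simp
qed

lemma ce_shift: assumes x: "x \<in> linf" shows "ce (\<lambda>n. x (Suc n)) = ce x"
proof -
  have "R x (\<lambda>n. x (Suc n))" "R (\<lambda>n. x (Suc n)) x" using ti x unfolding time_invariance_def by auto
  then show ?thesis using rep[OF x linf_shift[OF x]] rep[OF linf_shift[OF x] x] by auto
qed

lemma ce_idis: assumes x: "x \<in> linf" and d: "d \<in> linf" and "ce x \<le> ce (\<lambda>n. x n + d n)"
  shows "ce x \<le> ce (\<lambda>n. x n + delay d n)"
proof -
  have "R (\<lambda>n. x n + d n) x" using rep[OF linf_add[OF x d] x] assms(3) by simp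
  then have "R (\<lambda>n. x n + delay d n) x" using id x d unfolding IDIS_def by blast
  then show ?thesis using rep[OF linf_add[OF x linf_delay[OF d]] x] by simp
qed

lemma key1: assumes x: "x \<in> linf" and d: "d \<in> linf"
  shows "ce (\<lambda>n. x n + d n) \<le> ce (\<lambda>n. x (Suc n) + d n)"
proof -
  define a where "a = ce (\<lambda>n. x n + d n) - ce x"
  define d' where "d' = (\<lambda>n. d n + - a)"
  have d': "d' \<in> linf" unfolding d'_def by (rule linf_plusc[OF d])
  have "(\<lambda>n. x n + d' n) = (\<lambda>n. (x n + d n) + - a)" by (simp add: d'_def fun_eq_iff)
  then have "ce (\<lambda>n. x n + d' n) = ce x"
    using ce_transl[OF linf_add[OF x d], of "-a"] by (simp add: a_def)
  then have 1: "ce x \<le> ce (\<lambda>n. x n + delay d' n)" using ce_idis[OF x d'] by simp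
  have "ce (\<lambda>n. x n + delay d' n) = ce (\<lambda>n. x (Suc n) + delay d' (Suc n))"
    using ce_shift[OF linf_add[OF x linf_delay[OF d']]] by simp
  also have "(\<lambda>n. x (Suc n) + delay d' (Suc n)) = (\<lambda>n. (x (Suc n) + d n) + - a)"
    by (simp add: delay_def d'_def fun_eq_iff)
  also have "ce \<dots> = ce (\<lambda>n. x (Suc n) + d n) - a"
    using ce_transl[OF linf_add[OF linf_shift[OF x] d], of "-a"] by simp
  finally show ?thesis using 1 by (simp add: a_def)
qed

lemma key2: assumes x: "x \<in> linf" and z: "z \<in> linf"
  shows "ce (\<lambda>n. x n + (z n - z (Suc n))) \<le> ce x"
proof -
  define d where "d = (\<lambda>n. x n - z (Suc n))"
  have d: "d \<in> linf" unfolding d_def by (rule linf_diff[OF x linf_shift[OF z]])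
  have "ce (\<lambda>n. z n + d n) \<le> ce (\<lambda>n. z (Suc n) + d n)" by (rule key1[OF z d])
  moreover have "(\<lambda>n. z n + d n) = (\<lambda>n. x n + (z n - z (Suc n)))" by (simp add: d_def fun_eq_iff)
  moreover have "(\<lambda>n. z (Suc n) + d n) = x" by (simp add: d_def fun_eq_iff)
  ultimately show ?thesis by simp
qed

end


lemma BML_fa: "q \<in> BML \<Longrightarrow> q \<in> fa_prob" by (simp add: BML_def)

lemma BML_shift: "q \<in> BML \<Longrightarrow> x \<in> linf \<Longrightarrow> pairing (\<lambda>n. x (Suc n)) q = pairing x q"
  by (simp add: BML_def)

lemma subsp_linf: "subsp linf"
  unfolding subsp_def using linf_lc linf_cst by blast

context axR
begin

definition Mset :: "seq set" where
  "Mset = {(\<lambda>n. z n - z (Suc n)) | z. z \<in> linf}"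

lemma Mset_sub: "Mset \<subseteq> linf"
  unfolding Mset_def using linf_diff linf_shift by blast

lemma subsp_Mset: "subsp Mset"
  unfolding subsp_def
proof (intro conjI ballI allI)
  show "Mset \<noteq> {}" unfolding Mset_def using linf_cst by blast
next
  fix u v a b assume "u \<in> Mset" "v \<in> Mset"
  then obtain z z' where z: "z \<in> linf" "u = (\<lambda>n. z n - z (Suc n))" and z': "z' \<in> linf" "v = (\<lambda>n. z' n - z' (Suc n))"
    unfolding Mset_def by blast
  let ?w = "\<lambda>n. a * z n + b * z' n"
  have h1: "?w \<in> linf" using linf_lc[OF z(1) z'(1)] .
  have h2: "(\<lambda>j. a * u j + b * v j) = (\<lambda>n. ?w n - ?w (Suc n))"
    unfolding z z' by (simp add: fun_eq_iff algebra_simps)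
  show "(\<lambda>j. a * u j + b * v j) \<in> Mset" unfolding Mset_def
    by (intro CollectI exI[of _ "?w"] conjI h1 h2)
qed

lemma supergrad: assumes x: "x \<in> linf"
  shows "\<exists>q\<in>BML. \<forall>y\<in>linf. ce y \<le> ce x + pairing y q - pairing x q"
proof -
  define p where "p = (\<lambda>y. ce x - ce (\<lambda>n. x n + y n))"
  have lin0: "linon Mset (\<lambda>_. 0)" by (simp add: linon_def)
  have cvx: "cvxon linf p" unfolding cvxon_def
  proof (intro ballI allI impI)
    fix u v and t :: real assume u: "u \<in> linf" and v: "v \<in> linf" and t: "0 \<le> t \<and> t \<le> 1"
    have "(\<lambda>n. x n + (t * u n + (1 - t) * v n)) = (\<lambda>n. t * (x n + u n) + (1 - t) * (x n + v n))"
      by (simp add: fun_eq_iff algebra_simps)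
    moreover have "t * ce (\<lambda>n. x n + u n) + (1 - t) * ce (\<lambda>n. x n + v n)
        \<le> ce (\<lambda>n. t * (x n + u n) + (1 - t) * (x n + v n))"
      using t by (intro ce_concave linf_add x u v) auto
    ultimately show "p (\<lambda>j. t * u j + (1 - t) * v j) \<le> t * p u + (1 - t) * p v"
      unfolding p_def by (simp add: algebra_simps)
  qed
  have dom: "(\<lambda>_. 0) u \<le> p u" if uM: "u \<in> Mset" for u
  proof -
    obtain z where z: "z \<in> linf" "u = (\<lambda>n. z n - z (Suc n))" using uM unfolding Mset_def by blast
    show ?thesis unfolding p_def z(2) using key2[OF x z(1)] by simp
  qed
  obtain F where F: "linon linf F" "\<And>u. u \<in> Mset \<Longrightarrow> F u = 0" "\<And>u. u \<in> linf \<Longrightarrow> F u \<le> p u"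
    using hahn_banach_cvx[OF subsp_linf subsp_Mset Mset_sub lin0 cvx dom] by blast
  define L where "L = (\<lambda>y. - F y)"
  have linL: "linon linf L" using F(1) unfolding linon_def L_def by (simp add: algebra_simps)
  have sup: "ce (\<lambda>n. x n + y n) \<le> ce x + L y" if "y \<in> linf" for y
    using F(3)[OF that] unfolding L_def p_def by simp
  have pos: "L y \<ge> 0" if y: "y \<in> linf" and "\<And>n. y n \<ge> 0" for y
  proof -
    have "ce x \<le> ce (\<lambda>n. x n + y n)" using that by (intro ce_mono x linf_add) auto
    then show ?thesis using sup[OF y] by simp
  qed
  have one: "L (cst 1) = 1"
  proof -
    have a: "1 \<le> L (cst 1)" using sup[OF linf_cst, of 1] ce_transl[OF x, of 1] by (simp add: cst_def)
    have "(\<lambda>n. (-1) * cst 1 n) = cst (-1)" by (simp add: cst_def)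
    then have "L (cst (-1)) = - L (cst 1)" using L_scale[OF linL linf_cst[of 1], of "-1"] by simp
    moreover have "-1 \<le> L (cst (-1))" using sup[OF linf_cst, of "-1"] ce_transl[OF x, of "-1"] by (simp add: cst_def)
    ultimately show ?thesis using a by simp
  qed
  define q where "q = (\<lambda>A. L (indicator A))"
  have qfa: "q \<in> fa_prob" unfolding q_def by (rule L_fa[OF linL pos one]) auto
  have qr: "pairing y q = L y" if "y \<in> linf" for y
    unfolding q_def by (rule L_repr[OF linL pos one that]) auto
  have qB: "q \<in> BML" unfolding BML_def
  proof (intro CollectI conjI qfa ballI)
    fix z assume z: "z \<in> linf"
    have "(\<lambda>n. z n - z (Suc n)) \<in> Mset" unfolding Mset_def using z by blast
    then have "L (\<lambda>n. z n - z (Suc n)) = 0" using F(2) unfolding L_def by simp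
    then have "L z = L (\<lambda>n. z (Suc n))" using L_diff[OF linL z linf_shift[OF z]] by simp
    then show "pairing z q = pairing (\<lambda>n. z (Suc n)) q" using qr[OF z] qr[OF linf_shift[OF z]] by simp
  qed
  show ?thesis
  proof (intro bexI[OF _ qB] ballI)
    fix y assume y: "y \<in> linf"
    have "ce y = ce (\<lambda>n. x n + (y n - x n))" by simp
    also have "\<dots> \<le> ce x + L (\<lambda>n. y n - x n)" by (rule sup[OF linf_diff[OF y x]])
    also have "\<dots> = ce x + pairing y q - pairing x q"
      using L_diff[OF linL y x] qr[OF y] qr[OF x] by simp
    finally show "ce y \<le> ce x + pairing y q - pairing x q" .
  qed
qed

definition cost :: "setfun \<Rightarrow> ereal" where
  "cost q = (SUP y\<in>linf. ereal (ce y - pairing y q))"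

lemma cost_ge: "y \<in> linf \<Longrightarrow> ereal (ce y - pairing y q) \<le> cost q"
  unfolding cost_def by (rule SUP_upper)

lemma cost_nonneg: "q \<in> fa_prob \<Longrightarrow> 0 \<le> cost q"
  using cost_ge[OF linf_cst, of 0 q] ce_cst[of 0] pairing_cst[of q 0] by (simp add: zero_ereal_def)

lemma cost_at: assumes x: "x \<in> linf" and q: "\<forall>y\<in>linf. ce y \<le> ce x + pairing y q - pairing x q"
  shows "cost q = ereal (ce x - pairing x q)"
proof (rule antisym)
  show "cost q \<le> ereal (ce x - pairing x q)" unfolding cost_def
    by (rule SUP_least) (use q in auto)
  show "ereal (ce x - pairing x q) \<le> cost q" by (rule cost_ge[OF x])
qed

lemma varI_cost: assumes x: "x \<in> linf"
  shows "var_I cost x = ereal (ce x)" and "\<exists>q\<in>BML. ereal (pairing x q) + cost q = var_I cost x"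
proof -
  obtain q where q: "q \<in> BML" "\<forall>y\<in>linf. ce y \<le> ce x + pairing y q - pairing x q"
    using supergrad[OF x] by blast
  have at: "ereal (pairing x q) + cost q = ereal (ce x)" using cost_at[OF x q(2)] by simp
  have lb: "ereal (ce x) \<le> ereal (pairing x p) + cost p" if "p \<in> BML" for p
  proof -
    have "ereal (ce x) = ereal (pairing x p) + ereal (ce x - pairing x p)" by simp
    also have "\<dots> \<le> ereal (pairing x p) + cost p" by (intro add_mono order_refl cost_ge[OF x])
    finally show ?thesis .
  qed
  have "var_I cost x = ereal (ce x)" unfolding var_I_def
  proof (rule antisym)
    show "(INF p\<in>BML. ereal (pairing x p) + cost p) \<le> ereal (ce x)"
      using INF_lower[OF q(1), of "\<lambda>p. ereal (pairing x p) + cost p"] at by simp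
    show "ereal (ce x) \<le> (INF p\<in>BML. ereal (pairing x p) + cost p)"
      by (rule INF_greatest) (rule lb)
  qed
  then show "var_I cost x = ereal (ce x)" .
  then show "\<exists>q\<in>BML. ereal (pairing x q) + cost q = var_I cost x" using at q(1) by auto
qed

lemma topspace_ws: "topspace weak_star = UNIV"
proof -
  have "{\<mu>. pairing (cst 0) \<mu> \<in> UNIV} \<in> {{\<mu>. pairing x \<mu> \<in> U} | x U. x \<in> linf \<and> open U}"
    using linf_cst by blast
  then show ?thesis unfolding weak_star_def by auto
qed

lemma ws_basic: "x \<in> linf \<Longrightarrow> open U \<Longrightarrow> openin weak_star {\<mu>. pairing x \<mu> \<in> U}"
  unfolding weak_star_def by (rule topology_generated_by_Basis) blast

lemma cost_lsc: "weak_star_lsc cost"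
  unfolding weak_star_lsc_def
proof
  fix t :: ereal
  define U where "U y = {v::real. t < ereal (ce y - v)}" for y
  have openU: "open (U y)" for y
  proof (cases t)
    case (real r)
    then have "U y = {..< ce y - r}" unfolding U_def by auto
    then show ?thesis by simp
  next
    case PInf then have "U y = {}" unfolding U_def by auto
    then show ?thesis by simp
  next
    case MInf then have "U y = UNIV" unfolding U_def by auto
    then show ?thesis by simp
  qed
  define T where "T = (\<Union>y\<in>linf. {\<mu>. pairing y \<mu> \<in> U y})"
  have oT: "openin weak_star T" unfolding T_def
    by (rule openin_Union) (auto intro: ws_basic openU)
  have eq: "topspace (subtopology weak_star BML) - {p \<in> BML. cost p \<le> t} = T \<inter> BML"
  proof -
    have iff: "t < cost p \<longleftrightarrow> (\<exists>y\<in>linf. t < ereal (ce y - pairing y p))" for p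
      unfolding cost_def by (rule less_SUP_iff)
    show ?thesis
    proof (rule set_eqI)
      fix p
      have "p \<in> T \<longleftrightarrow> t < cost p" unfolding iff by (simp add: T_def U_def)
      then show "p \<in> topspace (subtopology weak_star BML) - {p \<in> BML. cost p \<le> t} \<longleftrightarrow> p \<in> T \<inter> BML"
        by (auto simp: topspace_subtopology topspace_ws not_le)
    qed
  qed
  have "openin (subtopology weak_star BML) (T \<inter> BML)"
    using oT by (auto simp: openin_subtopology)
  then show "closedin (subtopology weak_star BML) {p \<in> BML. cost p \<le> t}"
    unfolding closedin_def eq by (auto simp: topspace_subtopology topspace_ws)
qed

lemma cost_convex: "convex_cost cost"
  unfolding convex_cost_def
proof (intro ballI)
  fix p q t assume p: "p \<in> BML" and q: "q \<in> BML" and t: "t \<in> {0<..<1::real}"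
  have pf: "p \<in> fa_prob" and qf: "q \<in> fa_prob" using p q by (simp_all add: BML_def)
  show "cost (\<lambda>A. t * p A + (1 - t) * q A) \<le> ereal t * cost p + ereal (1 - t) * cost q"
    unfolding cost_def[where q="\<lambda>A. t * p A + (1 - t) * q A"]
  proof (rule SUP_least)
    fix y assume y: "y \<in> linf"
    have "ce y - pairing y (\<lambda>A. t * p A + (1 - t) * q A)
        = t * (ce y - pairing y p) + (1 - t) * (ce y - pairing y q)"
      using pairing_mix[OF y pf qf] t by (simp add: algebra_simps)
    then have "ereal (ce y - pairing y (\<lambda>A. t * p A + (1 - t) * q A))
        = ereal t * ereal (ce y - pairing y p) + ereal (1 - t) * ereal (ce y - pairing y q)" by simp
    also have "\<dots> \<le> ereal t * cost p + ereal (1 - t) * cost q"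
      using t by (intro add_mono ereal_mult_left_mono cost_ge[OF y]) auto
    finally show "ereal (ce y - pairing y (\<lambda>A. t * p A + (1 - t) * q A)) \<le> ereal t * cost p + ereal (1 - t) * cost q" .
  qed
qed

lemma cost_admissible: "admissible_cost cost"
  unfolding admissible_cost_def
proof (intro conjI ballI cost_lsc cost_convex)
  fix p assume "p \<in> BML" then show "0 \<le> cost p" using cost_nonneg BML_fa by blast
next
  obtain q where q: "q \<in> BML" "\<forall>y\<in>linf. ce y \<le> ce (cst 0) + pairing y q - pairing (cst 0) q"
    using supergrad[OF linf_cst] by blast
  have "cost q = 0" using cost_at[OF linf_cst q(2)] ce_cst pairing_cst[OF BML_fa[OF q(1)]] by (simp add: zero_ereal_def)
  then have "(INF p\<in>BML. cost p) \<le> 0" using INF_lower[OF q(1), of cost] by simp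
  moreover have "0 \<le> (INF p\<in>BML. cost p)" by (rule INF_greatest) (use cost_nonneg BML_fa in blast)
  ultimately show "grounded cost" unfolding grounded_def by (rule antisym)
qed

lemma cost_represents: "min_represents cost R"
  unfolding min_represents_def
proof (intro conjI ballI)
  fix x assume x: "x \<in> linf"
  show "\<exists>p\<in>BML. ereal (pairing x p) + cost p = var_I cost x" by (rule varI_cost(2)[OF x])
  show "\<exists>r. var_I cost x = ereal r \<and> R x (cst r) \<and> R (cst r) x"
    using varI_cost(1)[OF x] ce[OF x] by blast
next
  fix x y assume x: "x \<in> linf" and y: "y \<in> linf"
  show "R x y \<longleftrightarrow> var_I cost y \<le> var_I cost x"
    using rep[OF x y] varI_cost(1)[OF x] varI_cost(1)[OF y] by simp
qed

end


lemma linonD: "linon W F \<Longrightarrow> u \<in> W \<Longrightarrow> v \<in> W \<Longrightarrow> F (\<lambda>j. a * u j + b * v j) = a * F u + b * F v"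
  unfolding linon_def by blast

lemma lin_zero: assumes "linon W F" "subsp W" shows "F (\<lambda>i. 0) = 0"
proof -
  obtain u where u: "u \<in> W" using assms(2) by (auto simp: subsp_def)
  have "F (lc 0 u 0 u) = 0 * F u + 0 * F u" using assms(1) u unfolding linon_def by blast
  then show ?thesis by simp
qed

lemma lin_sum:
  assumes F: "linon W F" and W: "subsp W" and D: "finite D" and g: "\<And>j. j \<in> D \<Longrightarrow> g j \<in> W"
  shows "(\<lambda>i. \<Sum>j\<in>D. g j i) \<in> W \<and> F (\<lambda>i. \<Sum>j\<in>D. g j i) = (\<Sum>j\<in>D. F (g j))"
  using D g
proof (induction D rule: finite_induct)
  case empty then show ?case using subsp_zero[OF W] lin_zero[OF F W] by simp
next
  case (insert k D)
  then have IH: "(\<lambda>i. \<Sum>j\<in>D. g j i) \<in> W" "F (\<lambda>i. \<Sum>j\<in>D. g j i) = (\<Sum>j\<in>D. F (g j))" by auto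
  have gk: "g k \<in> W" using insert by auto
  have eq: "(\<lambda>i. \<Sum>j\<in>insert k D. g j i) = lc 1 (g k) 1 (\<lambda>i. \<Sum>j\<in>D. g j i)"
    using insert(1,2) by simp
  have "lc 1 (g k) 1 (\<lambda>i. \<Sum>j\<in>D. g j i) \<in> W" by (rule subspD[OF W gk IH(1)])
  moreover have "F (lc 1 (g k) 1 (\<lambda>i. \<Sum>j\<in>D. g j i)) = 1 * F (g k) + 1 * F (\<lambda>i. \<Sum>j\<in>D. g j i)"
    by (rule linonD[OF F gk IH(1)])
  ultimately show ?case unfolding eq using IH(2) insert(1,2) by simp
qed

lemma sepfin:
  fixes C :: "('j \<Rightarrow> real) set" and D :: "'j set"
  assumes D: "finite D" and Cne: "C \<noteq> {}" and CD: "\<And>w j. w \<in> C \<Longrightarrow> j \<notin> D \<Longrightarrow> w j = 0"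
    and Cc: "\<And>w1 w2 t. w1 \<in> C \<Longrightarrow> w2 \<in> C \<Longrightarrow> 0 \<le> t \<Longrightarrow> t \<le> 1 \<Longrightarrow> lc t w1 (1 - t) w2 \<in> C"
    and eps: "eps > 0" and far: "\<And>w. w \<in> C \<Longrightarrow> eps \<le> (\<Sum>j\<in>D. \<bar>w j\<bar>)"
  shows "\<exists>a. \<forall>w\<in>C. (\<Sum>j\<in>D. a j * w j) \<le> - eps"
proof -
  define W where "W = {v :: 'j \<Rightarrow> real. \<forall>j. j \<notin> D \<longrightarrow> v j = 0}"
  have W: "subsp W" unfolding subsp_def W_def by auto
  define N where "N v = (\<Sum>j\<in>D. \<bar>v j\<bar>)" for v :: "'j \<Rightarrow> real"
  have N0: "N v \<ge> 0" for v unfolding N_def by (intro sum_nonneg) auto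
  define h where "h v = Inf ((\<lambda>w. N (\<lambda>j. v j - w j)) ` C)" for v
  have bdd: "bdd_below ((\<lambda>w. N (\<lambda>j. v j - w j)) ` C)" for v
    using N0 by (intro bdd_belowI[of _ 0]) auto
  have h_le: "h v \<le> N (\<lambda>j. v j - w j)" if "w \<in> C" for v w
    unfolding h_def using that bdd by (intro cInf_lower) auto
  have h_ge: "b \<le> h v" if "\<And>w. w \<in> C \<Longrightarrow> b \<le> N (\<lambda>j. v j - w j)" for v b
    unfolding h_def using that Cne by (intro cInf_greatest) auto
  have h_approx: "\<exists>w\<in>C. N (\<lambda>j. v j - w j) < h v + e" if e: "e > 0" for v e
  proof -
    have "h v < h v + e" using e by simp
    then show ?thesis unfolding h_def[of v] using Cne bdd[of v] by (subst (asm) cInf_less_iff) auto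
  qed
  have Ntri: "N (\<lambda>j. t * a j + (1 - t) * b j) \<le> t * N a + (1 - t) * N b" if t: "0 \<le> t" "t \<le> 1" for a b t
  proof -
    have "N (\<lambda>j. t * a j + (1 - t) * b j) \<le> (\<Sum>j\<in>D. t * \<bar>a j\<bar> + (1 - t) * \<bar>b j\<bar>)"
      unfolding N_def
    proof (rule sum_mono)
      fix j
      have "\<bar>t * a j + (1 - t) * b j\<bar> \<le> \<bar>t * a j\<bar> + \<bar>(1 - t) * b j\<bar>" by (rule abs_triangle_ineq)
      also have "\<dots> = t * \<bar>a j\<bar> + (1 - t) * \<bar>b j\<bar>" using t by (simp add: abs_mult)
      finally show "\<bar>t * a j + (1 - t) * b j\<bar> \<le> t * \<bar>a j\<bar> + (1 - t) * \<bar>b j\<bar>" .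
    qed
    also have "\<dots> = t * N a + (1 - t) * N b" unfolding N_def by (simp add: sum.distrib sum_distrib_left)
    finally show ?thesis .
  qed
  have hcvx: "h (lc t u (1 - t) v) \<le> t * h u + (1 - t) * h v" if t: "0 \<le> t" "t \<le> 1" for u v t
  proof (rule small_le[of _ _ 1])
    fix e :: real assume e: "e > 0"
    obtain w1 where w1: "w1 \<in> C" "N (\<lambda>j. u j - w1 j) < h u + e" using h_approx[OF e] by blast
    obtain w2 where w2: "w2 \<in> C" "N (\<lambda>j. v j - w2 j) < h v + e" using h_approx[OF e] by blast
    have wC: "lc t w1 (1 - t) w2 \<in> C" by (rule Cc[OF w1(1) w2(1) t])
    have "h (lc t u (1 - t) v) \<le> N (\<lambda>j. lc t u (1 - t) v j - lc t w1 (1 - t) w2 j)" by (rule h_le[OF wC])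
    also have "(\<lambda>j. lc t u (1 - t) v j - lc t w1 (1 - t) w2 j) = (\<lambda>j. t * (u j - w1 j) + (1 - t) * (v j - w2 j))"
      by (simp add: fun_eq_iff algebra_simps)
    also have "N \<dots> \<le> t * N (\<lambda>j. u j - w1 j) + (1 - t) * N (\<lambda>j. v j - w2 j)" by (rule Ntri[OF t])
    also have "\<dots> \<le> t * (h u + e) + (1 - t) * (h v + e)"
      using w1(2) w2(2) t by (intro add_mono mult_left_mono) auto
    also have "\<dots> = t * h u + (1 - t) * h v + 1 * e" by (simp add: algebra_simps)
    finally show "h (lc t u (1 - t) v) \<le> t * h u + (1 - t) * h v + 1 * e" .
  qed simp
  have h0: "eps \<le> h (\<lambda>j. 0)"
    by (rule h_ge) (use far in \<open>simp add: N_def\<close>)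
  have hC: "h w \<le> 0" if "w \<in> C" for w
    using h_le[OF that, of w] by (simp add: N_def)
  define S0 where "S0 = {(\<lambda>j. 0) :: 'j \<Rightarrow> real}"
  have S0: "subsp S0" unfolding subsp_def S0_def by auto
  have S0W: "S0 \<subseteq> W" unfolding S0_def W_def by auto
  have lin0: "linon S0 (\<lambda>_. 0)" by (simp add: linon_def)
  have cvx: "cvxon W (\<lambda>v. h v - h (\<lambda>j. 0))" unfolding cvxon_def
  proof (intro ballI allI impI)
    fix u v and t :: real assume t: "0 \<le> t \<and> t \<le> 1"
    have "h (lc t u (1 - t) v) \<le> t * h u + (1 - t) * h v" using hcvx t by blast
    then show "h (lc t u (1 - t) v) - h (\<lambda>j. 0) \<le> t * (h u - h (\<lambda>j. 0)) + (1 - t) * (h v - h (\<lambda>j. 0))"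
      by (simp add: algebra_simps)
  qed
  have dom: "(\<lambda>_. 0) u \<le> h u - h (\<lambda>j. 0)" if "u \<in> S0" for u using that by (simp add: S0_def)
  obtain F where F: "linon W F" "\<And>u. u \<in> W \<Longrightarrow> F u \<le> h u - h (\<lambda>j. 0)"
    using hahn_banach_cvx[OF W S0 S0W lin0 cvx dom] by blast
  define e where "e k = (\<lambda>i. if i = k then 1 else (0::real))" for k :: 'j
  have eW: "e k \<in> W" if "k \<in> D" for k using that unfolding W_def e_def by auto
  show ?thesis
  proof (intro exI ballI)
    fix w assume w: "w \<in> C"
    have wW: "w \<in> W" using CD[OF w] unfolding W_def by auto
    have gW: "(\<lambda>i. w k * e k i) \<in> W" if "k \<in> D" for k
      using subspD[OF W eW[OF that] eW[OF that], of "w k" 0] by simp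
    have Fg: "F (\<lambda>i. w k * e k i) = w k * F (e k)" if kD: "k \<in> D" for k
    proof -
      have "F (lc (w k) (e k) 0 (e k)) = w k * F (e k) + 0 * F (e k)"
        using F(1) eW[OF kD] unfolding linon_def by blast
      then show ?thesis by simp
    qed
    have weq: "w = (\<lambda>i. \<Sum>k\<in>D. w k * e k i)"
    proof
      fix i
      show "w i = (\<Sum>k\<in>D. w k * e k i)"
      proof (cases "i \<in> D")
        case True
        have "(\<Sum>k\<in>D. w k * e k i) = (\<Sum>k\<in>D. if k = i then w i else 0)"
          by (intro sum.cong refl) (auto simp: e_def)
        also have "\<dots> = w i" using True D by simp
        finally show ?thesis by simp
      next
        case False
        then have "(\<Sum>k\<in>D. w k * e k i) = 0" by (intro sum.neutral) (auto simp: e_def)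
        then show ?thesis using CD[OF w False] by simp
      qed
    qed
    have "F w = F (\<lambda>i. \<Sum>k\<in>D. w k * e k i)" by (rule arg_cong[OF weq])
    also have "\<dots> = (\<Sum>k\<in>D. F (\<lambda>i. w k * e k i))"
    proof -
      have "(\<lambda>i. \<Sum>k\<in>D. w k * e k i) \<in> W \<and> F (\<lambda>i. \<Sum>k\<in>D. w k * e k i) = (\<Sum>k\<in>D. F (\<lambda>i. w k * e k i))"
        by (rule lin_sum[OF F(1) W D]) (rule gW)
      then show ?thesis by blast
    qed
    also have "\<dots> = (\<Sum>k\<in>D. F (e k) * w k)" by (intro sum.cong refl) (simp add: Fg)
    finally have Fw: "F w = (\<Sum>k\<in>D. F (e k) * w k)" .
    have "F w \<le> h w - h (\<lambda>j. 0)" by (rule F(2)[OF wW])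
    also have "\<dots> \<le> - eps" using hC[OF w] h0 by simp
    finally show "(\<Sum>k\<in>D. F (e k) * w k) \<le> - eps" using Fw by simp
  qed
qed


lemma gen_nbhd:
  assumes "generate_topology_on Sb V" "p \<in> V"
  shows "\<exists>F. finite F \<and> F \<subseteq> Sb \<and> p \<in> \<Inter>F \<and> \<Inter>F \<subseteq> V"
  using assms
proof (induction rule: generate_topology_on.induct)
  case Empty then show ?case by simp
next
  case (Int a b)
  have pa: "p \<in> a" and pb: "p \<in> b" using Int.prems by auto
  obtain F1 where F1: "finite F1" "F1 \<subseteq> Sb" "p \<in> \<Inter>F1" "\<Inter>F1 \<subseteq> a" using Int.IH(1)[OF pa] by blast
  obtain F2 where F2: "finite F2" "F2 \<subseteq> Sb" "p \<in> \<Inter>F2" "\<Inter>F2 \<subseteq> b" using Int.IH(2)[OF pb] by blast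
  have "\<Inter>(F1 \<union> F2) \<subseteq> a \<inter> b" using F1(4) F2(4) by blast
  then show ?case using F1 F2 by (intro exI[of _ "F1 \<union> F2"]) auto
next
  case (UN K)
  obtain k where k: "k \<in> K" "p \<in> k" using UN.prems by blast
  obtain F where F: "finite F" "F \<subseteq> Sb" "p \<in> \<Inter>F" "\<Inter>F \<subseteq> k" using UN.IH[OF k] by blast
  have "\<Inter>F \<subseteq> \<Union>K" using F(4) k(1) by blast
  then show ?case using F(1-3) by (intro exI[of _ F]) simp
next
  case (Basis s)
  then show ?case by (intro exI[of _ "{s}"]) auto
qed

lemma BML_mix: assumes p: "p \<in> BML" and q: "q \<in> BML" and t: "0 \<le> t" "t \<le> 1"
  shows "(\<lambda>A. t * p A + (1 - t) * q A) \<in> BML"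
proof -
  have pf: "p \<in> fa_prob" and qf: "q \<in> fa_prob" using p q by (simp_all add: BML_def)
  show ?thesis unfolding BML_def
  proof (intro CollectI conjI ballI)
    show "(\<lambda>A. t * p A + (1 - t) * q A) \<in> fa_prob" by (rule fa_mix[OF pf qf t])
    fix x assume x: "x \<in> linf"
    show "pairing x (\<lambda>A. t * p A + (1 - t) * q A) = pairing (\<lambda>n. x (Suc n)) (\<lambda>A. t * p A + (1 - t) * q A)"
      using pairing_mix[OF x pf qf t] pairing_mix[OF linf_shift[OF x] pf qf t] BML_shift[OF p x] BML_shift[OF q x]
      by simp
  qed
qed

lemma pairing_sum:
  assumes F: "finite F" and g: "\<And>G. G \<in> F \<Longrightarrow> g G \<in> linf" and mu: "\<mu> \<in> fa_prob"
  shows "(\<lambda>n. \<Sum>G\<in>F. a G * g G n) \<in> linf \<and> pairing (\<lambda>n. \<Sum>G\<in>F. a G * g G n) \<mu> = (\<Sum>G\<in>F. a G * pairing (g G) \<mu>)"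
  using F g
proof (induction F rule: finite_induct)
  case empty then show ?case using linf_const[of 0] pairing_const[OF mu, of 0] by simp
next
  case (insert H F)
  then have IH: "(\<lambda>n. \<Sum>G\<in>F. a G * g G n) \<in> linf" "pairing (\<lambda>n. \<Sum>G\<in>F. a G * g G n) \<mu> = (\<Sum>G\<in>F. a G * pairing (g G) \<mu>)"
    by auto
  have gH: "g H \<in> linf" using insert by auto
  have eq: "(\<lambda>n. \<Sum>G\<in>insert H F. a G * g G n) = (\<lambda>n. a H * g H n + 1 * (\<Sum>G\<in>F. a G * g G n))"
    using insert(1,2) by simp
  show ?case unfolding eq using linf_lc[OF gH IH(1), of "a H" 1] pairing_lin[OF gH IH(1) mu, of "a H" 1] IH(2) insert(1,2) by simp
qed

lemma ereal_sub_le: assumes "ereal a \<le> ereal b + X" shows "ereal (a - b) \<le> X"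
  using assms by (cases X) auto

context axR
begin

lemma varI_ce: assumes mr: "min_represents c' R" and x: "x \<in> linf" shows "var_I c' x = ereal (ce x)"
proof -
  obtain r where r: "var_I c' x = ereal r" "R x (cst r)" "R (cst r) x" using mr x unfolding min_represents_def by blast
  then show ?thesis using ce_unique[OF x r(2,3)] by simp
qed

lemma cost_le: assumes mr: "min_represents c' R" and p: "p \<in> BML" shows "cost p \<le> c' p"
  unfolding cost_def
proof (rule SUP_least)
  fix y assume y: "y \<in> linf"
  have "ereal (ce y) = var_I c' y" using varI_ce[OF mr y] by simp
  also have "\<dots> \<le> ereal (pairing y p) + c' p" unfolding var_I_def by (rule INF_lower[OF p])
  finally show "ereal (ce y - pairing y p) \<le> c' p" by (rule ereal_sub_le)
qed

end


context axR
begin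

lemma cost_ge_uniq:
  assumes adm: "admissible_cost c'" and mr: "min_represents c' R" and pB: "p \<in> BML"
  shows "c' p \<le> cost p"
proof (rule ccontr)
  assume "\<not> c' p \<le> cost p"
  then have lt: "cost p < c' p" by simp
  have c'nn: "\<And>q. q \<in> BML \<Longrightarrow> 0 \<le> c' q" using adm unfolding admissible_cost_def by blast
  have gr: "(INF q\<in>BML. c' q) = 0" using adm unfolding admissible_cost_def grounded_def by blast
  have lsc: "\<And>t. closedin (subtopology weak_star BML) {q \<in> BML. c' q \<le> t}"
    using adm unfolding admissible_cost_def weak_star_lsc_def by blast
  have cvx: "\<And>p q t. p \<in> BML \<Longrightarrow> q \<in> BML \<Longrightarrow> t \<in> {0<..<1::real} \<Longrightarrow>
      c' (\<lambda>A. t * p A + (1 - t) * q A) \<le> ereal t * c' p + ereal (1 - t) * c' q"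
    using adm unfolding admissible_cost_def convex_cost_def by blast
  have cpnn: "0 \<le> cost p" using cost_nonneg BML_fa[OF pB] by blast
  obtain cp where cp: "cost p = ereal cp" using lt cpnn by (cases "cost p") auto
  have cp0: "0 \<le> cp" using cpnn cp by simp
  obtain r2 where r2: "ereal cp < ereal r2" "ereal r2 < c' p" using ereal_dense2[OF lt[unfolded cp]] by blast
  define r where "r = (cp + r2) / 2"
  have rr: "cp < r" "r < r2" using r2(1) by (auto simp: r_def)
  \<comment> \<open>neighbourhood of p avoiding the sublevel set\<close>
  define K where "K = {q \<in> BML. c' q \<le> ereal r2}"
  have ts: "topspace (subtopology weak_star BML) = BML" by (simp add: topspace_subtopology topspace_ws)
  have cK: "closedin (subtopology weak_star BML) K" unfolding K_def by (rule lsc)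
  have "openin (subtopology weak_star BML) (topspace (subtopology weak_star BML) - K)"
    by (rule conjunct2[OF cK[unfolded closedin_def]])
  then have "openin (subtopology weak_star BML) (BML - K)" unfolding ts .
  then obtain V where V: "openin weak_star V" "BML - K = V \<inter> BML"
    unfolding openin_subtopology by blast
  have "\<not> c' p \<le> ereal r2" using r2(2) by (simp add: not_le)
  then have "p \<notin> K" unfolding K_def by blast
  then have "p \<in> BML - K" using pB by blast
  then have pV: "p \<in> V" using V(2) by blast
  define Sb where "Sb = {{\<mu>. pairing x \<mu> \<in> U} | x U. x \<in> linf \<and> open U}"
  have gV: "generate_topology_on Sb V" using V(1) unfolding weak_star_def Sb_def
    by (simp add: openin_topology_generated_by_iff)
  obtain Fs where Fs: "finite Fs" "Fs \<subseteq> Sb" "p \<in> \<Inter>Fs" "\<Inter>Fs \<subseteq> V"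
    using gen_nbhd[OF gV pV] by blast
  have "\<forall>G\<in>Fs. \<exists>xU. G = {\<mu>. pairing (fst xU) \<mu> \<in> snd xU} \<and> fst xU \<in> linf \<and> open (snd xU)"
  proof
    fix G assume "G \<in> Fs"
    then have "G \<in> Sb" using Fs(2) by blast
    then obtain x U where "G = {\<mu>. pairing x \<mu> \<in> U}" "x \<in> linf" "open U" unfolding Sb_def by blast
    then show "\<exists>xU. G = {\<mu>. pairing (fst xU) \<mu> \<in> snd xU} \<and> fst xU \<in> linf \<and> open (snd xU)"
      by (intro exI[of _ "(x, U)"]) simp
  qed
  from bchoice[OF this] obtain xU where xU0: "\<forall>G\<in>Fs. G = {\<mu>. pairing (fst (xU G)) \<mu> \<in> snd (xU G)} \<and> fst (xU G) \<in> linf \<and> open (snd (xU G))"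
    by (elim exE)
  have xU: "\<And>G. G \<in> Fs \<Longrightarrow> G = {\<mu>. pairing (fst (xU G)) \<mu> \<in> snd (xU G)} \<and> fst (xU G) \<in> linf \<and> open (snd (xU G))"
    using xU0 by blast
  define xs where "xs G = fst (xU G)" for G
  define Us where "Us G = snd (xU G)" for G
  have xsl: "\<And>G. G \<in> Fs \<Longrightarrow> xs G \<in> linf" and Uo: "\<And>G. G \<in> Fs \<Longrightarrow> open (Us G)"
    and Geq: "\<And>G. G \<in> Fs \<Longrightarrow> G = {\<mu>. pairing (xs G) \<mu> \<in> Us G}"
    using xU unfolding xs_def Us_def by blast+
  have "\<forall>G\<in>Fs. \<exists>e>0. \<forall>v. dist v (pairing (xs G) p) < e \<longrightarrow> v \<in> Us G"
  proof
    fix G assume G: "G \<in> Fs"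
    have "pairing (xs G) p \<in> Us G" using Fs(3) G Geq[OF G] by blast
    then show "\<exists>e>0. \<forall>v. dist v (pairing (xs G) p) < e \<longrightarrow> v \<in> Us G"
      using Uo[OF G] unfolding open_dist by blast
  qed
  from bchoice[OF this] obtain es where es0: "\<forall>G\<in>Fs. es G > 0 \<and> (\<forall>v. dist v (pairing (xs G) p) < es G \<longrightarrow> v \<in> Us G)"
    by (elim exE)
  have es: "\<And>G. G \<in> Fs \<Longrightarrow> es G > 0"
    "\<And>G v. G \<in> Fs \<Longrightarrow> dist v (pairing (xs G) p) < es G \<Longrightarrow> v \<in> Us G"
    using es0 by blast+
  define eps where "eps = Min (insert (r2 - r) (es ` Fs))"
  have fin_e: "finite (insert (r2 - r) (es ` Fs))" using Fs(1) by simp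
  have eps0: "eps > 0" unfolding eps_def using fin_e rr es(1) by (subst Min_gr_iff) auto
  have eps_r: "eps \<le> r2 - r" unfolding eps_def using fin_e by (intro Min_le) auto
  have eps_G: "eps \<le> es G" if "G \<in> Fs" for G unfolding eps_def using fin_e that by (intro Min_le) auto
  have P: "ereal r2 < c' q" if q: "q \<in> BML" and cl: "\<And>G. G \<in> Fs \<Longrightarrow> \<bar>pairing (xs G) q - pairing (xs G) p\<bar> < eps" for q
  proof -
    have "q \<in> G" if G: "G \<in> Fs" for G
    proof -
      have "dist (pairing (xs G) q) (pairing (xs G) p) < es G"
        using cl[OF G] eps_G[OF G] by (simp add: dist_real_def)
      then have "pairing (xs G) q \<in> Us G" by (rule es(2)[OF G])
      then show ?thesis using Geq[OF G] by blast
    qed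
    then have "q \<in> V" using Fs(4) by blast
    then have "q \<notin> K" using V(2) q by blast
    then show ?thesis using q unfolding K_def by auto
  qed
  \<comment> \<open>finite-dimensional picture\<close>
  define D where "D = insert None (Some ` Fs)"
  have finD: "finite D" using Fs(1) by (simp add: D_def)
  define Phi where "Phi q s = (\<lambda>j. case j of None \<Rightarrow> s - r
      | Some G \<Rightarrow> if G \<in> Fs then pairing (xs G) q - pairing (xs G) p else 0)" for q s
  define C where "C = {Phi q s | q s. q \<in> BML \<and> c' q \<le> ereal s}"
  have "(INF q\<in>BML. c' q) < 1" using gr by simp
  then obtain q0 where q0: "q0 \<in> BML" "c' q0 < 1" by (auto simp: INF_less_iff)
  have q01: "c' q0 \<le> ereal 1" using q0(2) by (simp add: one_ereal_def)
  have q0le: "c' q0 \<le> ereal s" if s1: "1 \<le> s" for s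
  proof -
    have "ereal 1 \<le> ereal s" using s1 by simp
    then show ?thesis using q01 by (rule order_trans[rotated])
  qed
  have Cne: "C \<noteq> {}" unfolding C_def using q0(1) q0le[of 1] by blast
  have CD: "w j = 0" if wj: "w \<in> C" "j \<notin> D" for w j
  proof -
    obtain q s where ws: "w = Phi q s" using wj(1) unfolding C_def by blast
    have "j \<noteq> None" using wj(2) unfolding D_def by auto
    then obtain G where G: "j = Some G" by (cases j) auto
    have "G \<notin> Fs" using wj(2) G unfolding D_def by blast
    then show ?thesis unfolding ws G Phi_def by simp
  qed
  have Cc: "lc t w1 (1 - t) w2 \<in> C" if w1: "w1 \<in> C" and w2: "w2 \<in> C" and t: "0 \<le> t" "t \<le> 1" for w1 w2 t
  proof -
    obtain q1 s1 where 1: "w1 = Phi q1 s1" "q1 \<in> BML" "c' q1 \<le> ereal s1" using w1 unfolding C_def by blast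
    obtain q2 s2 where 2: "w2 = Phi q2 s2" "q2 \<in> BML" "c' q2 \<le> ereal s2" using w2 unfolding C_def by blast
    define qm where "qm = (\<lambda>A. t * q1 A + (1 - t) * q2 A)"
    have qmB: "qm \<in> BML" unfolding qm_def by (rule BML_mix[OF 1(2) 2(2) t])
    have cqm: "c' qm \<le> ereal (t * s1 + (1 - t) * s2)"
    proof (cases "t = 0 \<or> t = 1")
      case True
      then show ?thesis
      proof
        assume "t = 0" then have "qm = q2" unfolding qm_def by (simp add: fun_eq_iff)
        then show ?thesis using 2(3) \<open>t = 0\<close> by simp
      next
        assume "t = 1" then have "qm = q1" unfolding qm_def by (simp add: fun_eq_iff)
        then show ?thesis using 1(3) \<open>t = 1\<close> by simp
      qed
    next
      case False
      then have tt: "t \<in> {0<..<1}" using t by auto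
      have "c' qm \<le> ereal t * c' q1 + ereal (1 - t) * c' q2" unfolding qm_def by (rule cvx[OF 1(2) 2(2) tt])
      also have "\<dots> \<le> ereal t * ereal s1 + ereal (1 - t) * ereal s2"
        using t 1(3) 2(3) by (intro add_mono ereal_mult_left_mono) auto
      finally show ?thesis by simp
    qed
    have "lc t w1 (1 - t) w2 = Phi qm (t * s1 + (1 - t) * s2)"
    proof
      fix j
      show "lc t w1 (1 - t) w2 j = Phi qm (t * s1 + (1 - t) * s2) j"
      proof (cases j)
        case None then show ?thesis unfolding 1(1) 2(1) Phi_def by (simp add: algebra_simps)
      next
        case (Some G)
        show ?thesis
        proof (cases "G \<in> Fs")
          case True
          have "pairing (xs G) qm = t * pairing (xs G) q1 + (1 - t) * pairing (xs G) q2"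
            unfolding qm_def by (rule pairing_mix[OF xsl[OF True] BML_fa[OF 1(2)] BML_fa[OF 2(2)] t])
          then show ?thesis unfolding 1(1) 2(1) Phi_def using Some True by (simp add: algebra_simps)
        next
          case False then show ?thesis unfolding 1(1) 2(1) Phi_def using Some by simp
        qed
      qed
    qed
    then show ?thesis unfolding C_def
      by (intro CollectI exI[of _ qm] exI[of _ "t * s1 + (1 - t) * s2"] conjI qmB cqm)
  qed
  have far: "eps \<le> (\<Sum>j\<in>D. \<bar>w j\<bar>)" if w: "w \<in> C" for w
  proof -
    obtain q s where qs: "w = Phi q s" "q \<in> BML" "c' q \<le> ereal s" using w unfolding C_def by blast
    have nn: "\<And>j. 0 \<le> \<bar>w j\<bar>" by simp
    show ?thesis
    proof (cases "\<exists>G\<in>Fs. eps \<le> \<bar>pairing (xs G) q - pairing (xs G) p\<bar>")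
      case True
      then obtain G where G: "G \<in> Fs" "eps \<le> \<bar>pairing (xs G) q - pairing (xs G) p\<bar>" by blast
      have "\<bar>w (Some G)\<bar> \<le> (\<Sum>j\<in>D. \<bar>w j\<bar>)"
        using finD G(1) by (intro member_le_sum) (auto simp: D_def)
      moreover have "\<bar>w (Some G)\<bar> = \<bar>pairing (xs G) q - pairing (xs G) p\<bar>" using G(1) unfolding qs(1) Phi_def by simp
      ultimately show ?thesis using G(2) by simp
    next
      case False
      then have "\<And>G. G \<in> Fs \<Longrightarrow> \<bar>pairing (xs G) q - pairing (xs G) p\<bar> < eps" by (simp add: not_le)
      then have "ereal r2 < c' q" by (rule P[OF qs(2)])
      then have "ereal r2 < ereal s" using qs(3) by (rule less_le_trans)
      then have "r2 < s" by simp
      then have "eps \<le> \<bar>w None\<bar>" using eps_r unfolding qs(1) Phi_def by simp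
      moreover have "\<bar>w None\<bar> \<le> (\<Sum>j\<in>D. \<bar>w j\<bar>)"
        using finD by (intro member_le_sum) (auto simp: D_def)
      ultimately show ?thesis by simp
    qed
  qed
  have ex: "\<exists>a. \<forall>w\<in>C. (\<Sum>j\<in>D. a j * w j) \<le> - eps"
  proof (rule sepfin[OF finD Cne _ _ eps0])
    show "\<And>w j. w \<in> C \<Longrightarrow> j \<notin> D \<Longrightarrow> w j = 0" by (rule CD)
    show "\<And>w1 w2 t. w1 \<in> C \<Longrightarrow> w2 \<in> C \<Longrightarrow> 0 \<le> t \<Longrightarrow> t \<le> 1 \<Longrightarrow> lc t w1 (1 - t) w2 \<in> C" by (rule Cc)
    show "\<And>w. w \<in> C \<Longrightarrow> eps \<le> (\<Sum>j\<in>D. \<bar>w j\<bar>)" by (rule far)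
  qed
  obtain a where a: "\<And>w. w \<in> C \<Longrightarrow> (\<Sum>j\<in>D. a j * w j) \<le> - eps"
    using ex by blast
  define y where "y = (\<lambda>n. - (\<Sum>G\<in>Fs. a (Some G) * xs G n))"
  define beta where "beta = a None"
  have ysum: "(\<lambda>n. \<Sum>G\<in>Fs. a (Some G) * xs G n) \<in> linf \<and>
      pairing (\<lambda>n. \<Sum>G\<in>Fs. a (Some G) * xs G n) q = (\<Sum>G\<in>Fs. a (Some G) * pairing (xs G) q)"
    if "q \<in> fa_prob" for q
    by (rule pairing_sum[OF Fs(1) _ that]) (rule xsl)
  have yl: "y \<in> linf" unfolding y_def using linf_scale[OF conjunct1[OF ysum[OF BML_fa[OF pB]]], of "-1"] by simp
  have py: "pairing y q = - (\<Sum>G\<in>Fs. a (Some G) * pairing (xs G) q)" if "q \<in> fa_prob" for q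
    unfolding y_def using pairing_scale[OF conjunct1[OF ysum[OF that]] that, of "-1"] ysum[OF that] by simp
  have main: "pairing y q - pairing y p \<ge> eps + beta * (s - r)" if q: "q \<in> BML" "c' q \<le> ereal s" for q s
  proof -
    have "Phi q s \<in> C" unfolding C_def using q by blast
    then have 1: "(\<Sum>j\<in>D. a j * Phi q s j) \<le> - eps" by (rule a)
    have "(\<Sum>j\<in>D. a j * Phi q s j) = a None * (s - r) + (\<Sum>j\<in>Some ` Fs. a j * Phi q s j)"
      unfolding D_def by (subst sum.insert) (auto simp: Fs(1) Phi_def)
    also have "(\<Sum>j\<in>Some ` Fs. a j * Phi q s j) = (\<Sum>G\<in>Fs. a (Some G) * (pairing (xs G) q - pairing (xs G) p))"
      by (subst sum.reindex) (auto simp: Phi_def intro!: sum.cong)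
    also have "\<dots> = - pairing y q + pairing y p"
      using py[OF BML_fa[OF q(1)]] py[OF BML_fa[OF pB]]
      by (simp add: right_diff_distrib sum_subtractf)
    finally show ?thesis using 1 unfolding beta_def by simp
  qed
  have beta0: "beta \<le> 0"
  proof (rule ccontr)
    assume "\<not> beta \<le> 0"
    then have b: "beta > 0" by simp
    define k where "k = pairing y q0 - pairing y p"
    define s where "s = max 1 (r + (\<bar>k\<bar> + 1) / beta)"
    have "k \<ge> eps + beta * (s - r)" using main[OF q0(1) q0le[of s]] unfolding k_def s_def by simp
    moreover have "beta * (s - r) \<ge> \<bar>k\<bar> + 1"
    proof -
      have "s - r \<ge> (\<bar>k\<bar> + 1) / beta" unfolding s_def by simp
      then have "beta * (s - r) \<ge> beta * ((\<bar>k\<bar> + 1) / beta)" using b by (intro mult_left_mono) auto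
      then show ?thesis using b by simp
    qed
    ultimately show False using eps0 by linarith
  qed
  define gam where "gam = - beta"
  have gam0: "gam \<ge> 0" using beta0 by (simp add: gam_def)
  obtain t where t: "0 \<le> t" "t * gam \<le> 1" "cp < t * (eps + gam * r)"
  proof (cases "gam > 0")
    case True
    have "t * (eps + gam * r) = eps / gam + r" if "t = 1 / gam" for t using True that by (simp add: field_simps)
    moreover have "eps / gam + r > cp" using eps0 True rr by (smt (verit) divide_pos_pos)
    ultimately show ?thesis using that[of "1 / gam"] True by simp
  next
    case False
    then have g: "gam = 0" using gam0 by simp
    show ?thesis using that[of "(cp + 1) / eps"] g eps0 cp0 by (simp add: field_simps)
  qed
  define z where "z = (\<lambda>n. t * y n)"
  have zl: "z \<in> linf" unfolding z_def by (rule linf_scale[OF yl])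
  have pz: "pairing z q = t * pairing y q" if "q \<in> fa_prob" for q unfolding z_def by (rule pairing_scale[OF yl that])
  have "ereal (t * pairing y p + t * (eps + gam * r)) \<le> var_I c' z" unfolding var_I_def
  proof (rule INF_greatest)
    fix q assume q: "q \<in> BML"
    show "ereal (t * pairing y p + t * (eps + gam * r)) \<le> ereal (pairing z q) + c' q"
    proof (cases "c' q")
      case PInf then show ?thesis by simp
    next
      case MInf then show ?thesis using c'nn[OF q] by simp
    next
      case (real s)
      have s0: "0 \<le> s" using c'nn[OF q] real by simp
      have m: "pairing y q - pairing y p \<ge> eps + beta * (s - r)" using main[OF q] real by simp
      have "t * (pairing y q - pairing y p) \<ge> t * (eps + beta * (s - r))" using m t(1) by (rule mult_left_mono)
      moreover have "s * (1 - t * gam) \<ge> 0" using s0 t(2) by simp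
      ultimately have "t * pairing y q + s \<ge> t * pairing y p + t * (eps + gam * r)"
        unfolding gam_def by (simp add: algebra_simps)
      then show ?thesis using real pz[OF BML_fa[OF q]] by simp
    qed
  qed
  then have "t * pairing y p + t * (eps + gam * r) \<le> ce z" using varI_ce[OF mr zl] by simp
  then have "ereal (t * (eps + gam * r)) \<le> ereal (ce z - pairing z p)" using pz[OF BML_fa[OF pB]] by simp
  also have "\<dots> \<le> cost p" by (rule cost_ge[OF zl])
  finally show False using t(3) cp by simp
qed

lemma cost_unique:
  assumes "admissible_cost c'" "min_represents c' R" "p \<in> BML"
  shows "c' p = cost p"
  using cost_ge_uniq[OF assms] cost_le[OF assms(2,3)] by (rule antisym)

end


locale repC =
  fixes c :: "setfun \<Rightarrow> ereal" and R :: "seq \<Rightarrow> seq \<Rightarrow> bool"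
  assumes adm: "admissible_cost c" and mr: "min_represents c R"
begin

definition J :: "seq \<Rightarrow> real" where "J x = real_of_ereal (var_I c x)"

lemma c_nn: "p \<in> BML \<Longrightarrow> 0 \<le> c p"
  using adm unfolding admissible_cost_def by blast

lemma grd: "(INF p\<in>BML. c p) = 0"
  using adm unfolding admissible_cost_def grounded_def by blast

lemma V_fin: assumes x: "x \<in> linf" shows "var_I c x = ereal (J x)"
proof -
  obtain r where "var_I c x = ereal r" using mr x unfolding min_represents_def by blast
  then show ?thesis by (simp add: J_def)
qed

lemma repJ: "x \<in> linf \<Longrightarrow> y \<in> linf \<Longrightarrow> R x y \<longleftrightarrow> J y \<le> J x"
  using mr V_fin unfolding min_represents_def by simp

lemma ineq: assumes x: "x \<in> linf" and p: "p \<in> BML" and s: "c p = ereal s"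
  shows "J x \<le> pairing x p + s"
proof -
  have "var_I c x \<le> ereal (pairing x p) + c p" unfolding var_I_def by (rule INF_lower[OF p])
  then show ?thesis using V_fin[OF x] s by simp
qed

lemma att: assumes x: "x \<in> linf" obtains p s where "p \<in> BML" "c p = ereal s" "J x = pairing x p + s"
proof -
  obtain p where p: "p \<in> BML" "ereal (pairing x p) + c p = var_I c x" using mr x unfolding min_represents_def by blast
  then have e: "ereal (pairing x p) + c p = ereal (J x)" using V_fin[OF x] by simp
  then obtain s where s: "c p = ereal s" by (cases "c p") auto
  then have "J x = pairing x p + s" using e by simp
  then show ?thesis using that p(1) s by blast
qed

lemma J_cst: "J (cst t) = t"
proof -
  obtain p s where p: "p \<in> BML" "c p = ereal s" "J (cst t) = pairing (cst t) p + s" using att[OF linf_cst] by blast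
  have pc: "pairing (cst t) p = t" using pairing_cst[OF BML_fa[OF p(1)]] .
  have "s \<le> 0"
  proof (rule ccontr)
    assume "\<not> s \<le> 0"
    then have "(0::ereal) < ereal s" by simp
    then have "(INF q\<in>BML. c q) < ereal s" using grd by simp
    then obtain q where q: "q \<in> BML" "c q < ereal s" by (auto simp: INF_less_iff)
    then obtain s' where s': "c q = ereal s'" using c_nn[OF q(1)] by (cases "c q") auto
    have "J (cst t) \<le> t + s'" using ineq[OF linf_cst q(1) s'] pairing_cst[OF BML_fa[OF q(1)]] by simp
    moreover have "s' < s" using q(2) s' by simp
    ultimately show False using p(3) pc by simp
  qed
  moreover have "0 \<le> s" using c_nn[OF p(1)] p(2) by simp
  ultimately show ?thesis using p(3) pc by simp
qed

lemma J_mono: assumes x: "x \<in> linf" and y: "y \<in> linf" and le: "\<And>n. x n \<le> y n" shows "J x \<le> J y"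
proof -
  obtain p s where p: "p \<in> BML" "c p = ereal s" "J y = pairing y p + s" using att[OF y] by blast
  have "J x \<le> pairing x p + s" by (rule ineq[OF x p(1,2)])
  also have "\<dots> \<le> pairing y p + s" using pairing_mono[OF x y BML_fa[OF p(1)] le] by simp
  finally show ?thesis using p(3) by simp
qed

lemma J_transl: assumes x: "x \<in> linf" shows "J (\<lambda>n. x n + t) = J x + t"
proof (rule antisym)
  obtain p s where p: "p \<in> BML" "c p = ereal s" "J x = pairing x p + s" using att[OF x] by blast
  have "J (\<lambda>n. x n + t) \<le> pairing (\<lambda>n. x n + t) p + s" by (rule ineq[OF linf_plusc[OF x] p(1,2)])
  then show "J (\<lambda>n. x n + t) \<le> J x + t" using pairing_plusc[OF x BML_fa[OF p(1)]] p(3) by simp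
next
  obtain p s where p: "p \<in> BML" "c p = ereal s" "J (\<lambda>n. x n + t) = pairing (\<lambda>n. x n + t) p + s"
    using att[OF linf_plusc[OF x]] by blast
  have "J x \<le> pairing x p + s" by (rule ineq[OF x p(1,2)])
  then show "J x + t \<le> J (\<lambda>n. x n + t)" using pairing_plusc[OF x BML_fa[OF p(1)]] p(3) by simp
qed

lemma J_concave: assumes x: "x \<in> linf" and y: "y \<in> linf" and t: "0 \<le> t" "t \<le> 1"
  shows "t * J x + (1 - t) * J y \<le> J (\<lambda>n. t * x n + (1 - t) * y n)"
proof -
  obtain p s where p: "p \<in> BML" "c p = ereal s" "J (\<lambda>n. t * x n + (1 - t) * y n) = pairing (\<lambda>n. t * x n + (1 - t) * y n) p + s"
    using att[OF linf_lc[OF x y]] by blast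
  have "J x \<le> pairing x p + s" "J y \<le> pairing y p + s" using ineq[OF x p(1,2)] ineq[OF y p(1,2)] by auto
  then have "t * J x + (1 - t) * J y \<le> t * (pairing x p + s) + (1 - t) * (pairing y p + s)"
    using t by (intro add_mono mult_left_mono) auto
  also have "\<dots> = pairing (\<lambda>n. t * x n + (1 - t) * y n) p + s"
    using pairing_lin[OF x y BML_fa[OF p(1)], of t "1 - t"] by (simp add: algebra_simps)
  finally show ?thesis using p(3) by simp
qed

lemma J_pairing_eq: assumes x: "x \<in> linf" and y: "y \<in> linf" and eq: "\<And>p. p \<in> BML \<Longrightarrow> pairing x p = pairing y p"
  shows "J x = J y"
proof (rule antisym)
  obtain p s where p: "p \<in> BML" "c p = ereal s" "J y = pairing y p + s" using att[OF y] by blast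
  show "J x \<le> J y" using ineq[OF x p(1,2)] p(3) eq[OF p(1)] by simp
next
  obtain p s where p: "p \<in> BML" "c p = ereal s" "J x = pairing x p + s" using att[OF x] by blast
  show "J y \<le> J x" using ineq[OF y p(1,2)] p(3) eq[OF p(1)] by simp
qed

lemma J_lip: assumes x: "x \<in> linf" and y: "y \<in> linf" and B: "\<And>n. \<bar>x n - y n\<bar> \<le> B"
  shows "\<bar>J x - J y\<bar> \<le> B"
proof -
  have a: "J x \<le> J y + B" if x: "x \<in> linf" and y: "y \<in> linf" and B: "\<And>n. \<bar>x n - y n\<bar> \<le> B" for x y
  proof -
    obtain p s where p: "p \<in> BML" "c p = ereal s" "J y = pairing y p + s" using att[OF y] by blast
    have "J x \<le> pairing x p + s" by (rule ineq[OF x p(1,2)])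
    moreover have "\<bar>pairing x p - pairing y p\<bar> \<le> B" by (rule pairing_lip[OF x y BML_fa[OF p(1)] B])
    ultimately show ?thesis using p(3) by (simp add: abs_le_iff)
  qed
  have "\<bar>y n - x n\<bar> \<le> B" for n using B[of n] by (simp add: abs_minus_commute)
  then show ?thesis using a[OF x y B] a[OF y x] by (simp add: abs_le_iff)
qed

lemma axioms_hold: "weak_order R \<and> monotonicity R \<and> continuity R \<and> ICRP R \<and> convexity R \<and> IDIS R \<and> time_invariance R"
proof (intro conjI)
  show "weak_order R" unfolding weak_order_def using repJ by auto
next
  show "monotonicity R" unfolding monotonicity_def
    using repJ J_mono linf_cst J_cst by auto
next
  show "continuity R" unfolding continuity_def
  proof (intro ballI impI conjI)
    fix x y z assume x: "x \<in> linf" and y: "y \<in> linf" and z: "z \<in> linf"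
    let ?m = "\<lambda>\<alpha>::real. (\<lambda>n. \<alpha> * x n + (1 - \<alpha>) * z n)"
    have ml: "?m \<alpha> \<in> linf" for \<alpha> by (rule linf_lc[OF x z])
    obtain B where B: "\<And>n. \<bar>x n - z n\<bar> \<le> B" using linf_bound[OF linf_diff[OF x z]] by blast
    have B0: "0 \<le> B" using B[of 0] by linarith
    have lip: "B-lipschitz_on UNIV (\<lambda>\<alpha>. J (?m \<alpha>))"
    proof (rule lipschitz_onI)
      fix a b :: real
      have "\<bar>?m a n - ?m b n\<bar> \<le> B * \<bar>a - b\<bar>" for n
      proof -
        have "\<bar>?m a n - ?m b n\<bar> = \<bar>a - b\<bar> * \<bar>x n - z n\<bar>" by (simp add: algebra_simps abs_mult[symmetric])
        also have "\<dots> \<le> \<bar>a - b\<bar> * B" using B[of n] by (intro mult_left_mono) auto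
        finally show ?thesis by (simp add: mult.commute)
      qed
      then show "dist (J (?m a)) (J (?m b)) \<le> B * dist a b"
        unfolding dist_real_def by (intro J_lip ml)
    qed (rule B0)
    have cont: "continuous_on UNIV (\<lambda>\<alpha>. J (?m \<alpha>))" by (rule lipschitz_on_continuous_on[OF lip])
    have e1: "{\<alpha> \<in> {0..1}. R (?m \<alpha>) y} = {0..1} \<inter> {\<alpha>. (\<lambda>_. J y) \<alpha> \<le> J (?m \<alpha>)}"
      using repJ[OF ml y] by auto
    have e2: "{\<alpha> \<in> {0..1}. R y (?m \<alpha>)} = {0..1} \<inter> {\<alpha>. J (?m \<alpha>) \<le> (\<lambda>_. J y) \<alpha>}"
      using repJ[OF y ml] by auto
    show "closed {\<alpha> \<in> {0..1}. R (?m \<alpha>) y}" unfolding e1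
      by (intro closed_Int closed_atLeastAtMost closed_Collect_le cont continuous_on_const)
    show "closed {\<alpha> \<in> {0..1}. R y (?m \<alpha>)}" unfolding e2
      by (intro closed_Int closed_atLeastAtMost closed_Collect_le cont continuous_on_const)
  qed
next
  show "ICRP R" unfolding ICRP_def
    using repJ linf_plusc J_transl by auto
next
  show "convexity R" unfolding convexity_def
  proof (intro ballI allI impI)
    fix x y t \<theta> assume x: "x \<in> linf" and y: "y \<in> linf" and t: "t \<in> {0..1::real}" and h: "R x (cst \<theta>) \<and> R y (cst \<theta>)"
    have "\<theta> \<le> J x" "\<theta> \<le> J y" using h repJ[OF x linf_cst] repJ[OF y linf_cst] J_cst by auto
    then have "t * \<theta> + (1 - t) * \<theta> \<le> t * J x + (1 - t) * J y" using t by (intro add_mono mult_left_mono) auto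
    also have "\<dots> \<le> J (\<lambda>n. t * x n + (1 - t) * y n)" using J_concave[OF x y] t by auto
    finally have h2: "t * \<theta> + (1 - t) * \<theta> \<le> J (\<lambda>n. t * x n + (1 - t) * y n)" .
    have "t * \<theta> + (1 - t) * \<theta> = \<theta>" by (simp add: algebra_simps)
    then have h3: "J (cst \<theta>) \<le> J (\<lambda>n. t * x n + (1 - t) * y n)" using h2 J_cst[of \<theta>] by simp
    show "R (\<lambda>n. t * x n + (1 - t) * y n) (cst \<theta>)"
      using repJ[OF linf_lc[OF x y] linf_cst, of t "1 - t" \<theta>] h3 by blast
  qed
next
  show "IDIS R" unfolding IDIS_def
  proof (intro ballI impI)
    fix x d assume x: "x \<in> linf" and d: "d \<in> linf" and h: "R (\<lambda>n. x n + d n) x"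
    have "J (\<lambda>n. x n + delay d n) = J (\<lambda>n. x n + d n)"
    proof (rule J_pairing_eq[OF linf_add[OF x linf_delay[OF d]] linf_add[OF x d]])
      fix p assume p: "p \<in> BML"
      have "pairing (delay d) p = pairing (\<lambda>n. delay d (Suc n)) p" using BML_shift[OF p linf_delay[OF d]] by simp
      also have "(\<lambda>n. delay d (Suc n)) = d" by (simp add: delay_def)
      finally show "pairing (\<lambda>n. x n + delay d n) p = pairing (\<lambda>n. x n + d n) p"
        using pairing_add[OF x linf_delay[OF d] BML_fa[OF p]] pairing_add[OF x d BML_fa[OF p]] by simp
    qed
    then show "R (\<lambda>n. x n + delay d n) x"
      using h repJ[OF linf_add[OF x d] x] repJ[OF linf_add[OF x linf_delay[OF d]] x] by simp
  qed
next
  show "time_invariance R" unfolding time_invariance_def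
  proof (intro ballI conjI)
    fix x assume x: "x \<in> linf"
    have "J (\<lambda>n. x (Suc n)) = J x"
      by (rule J_pairing_eq[OF linf_shift[OF x] x]) (rule BML_shift[OF _ x])
    then show "R x (\<lambda>n. x (Suc n))" "R (\<lambda>n. x (Suc n)) x"
      using repJ[OF x linf_shift[OF x]] repJ[OF linf_shift[OF x] x] by auto
  qed
qed

end

theorem proposition7:
  fixes R :: "seq \<Rightarrow> seq \<Rightarrow> bool"
  shows "(weak_order R \<and> monotonicity R \<and> continuity R \<and> ICRP R \<and> convexity R \<and>
          IDIS R \<and> time_invariance R) \<longleftrightarrow>
         (\<exists>c. admissible_cost c \<and> min_represents c R \<and>
              (\<forall>c'. admissible_cost c' \<and> min_represents c' R \<longrightarrow> (\<forall>p\<in>BML. c' p = c p)))"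
proof
  assume "weak_order R \<and> monotonicity R \<and> continuity R \<and> ICRP R \<and> convexity R \<and> IDIS R \<and> time_invariance R"
  then interpret axR R by unfold_locales auto
  show "\<exists>c. admissible_cost c \<and> min_represents c R \<and>
              (\<forall>c'. admissible_cost c' \<and> min_represents c' R \<longrightarrow> (\<forall>p\<in>BML. c' p = c p))"
    using cost_admissible cost_represents cost_unique by blast
next
  assume "\<exists>c. admissible_cost c \<and> min_represents c R \<and>
              (\<forall>c'. admissible_cost c' \<and> min_represents c' R \<longrightarrow> (\<forall>p\<in>BML. c' p = c p))"
  then obtain c where "admissible_cost c" "min_represents c R" by blast
  then interpret repC c R by unfold_locales
  show "weak_order R \<and> monotonicity R \<and> continuity R \<and> ICRP R \<and> convexity R \<and> IDIS R \<and> time_invariance R"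
    by (rule axioms_hold)
qed


end
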